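(* Let $D$ be a division algebra and let $\sigma_1,\ldots,\sigma_n$ be pairwise commuting automorphisms of $D$ such that $F=\mathcal{Z}(D)\cap\bigl(\bigcap_{i=1}^n D_{\sigma_i}\bigr)$ is infinite. If $\sigma_1^{d_1}=\cdots=\sigma_n^{d_n}$ for some positive integers $d_1,\ldots,d_n$, then the tuple $(\sigma_1,\ldots,\sigma_n)$ is automorphically normalizable over $D$. In particular, if $\sigma_1,\ldots,\sigma_n$ are of finite orders, then the tuple $(\sigma_1,\ldots,\sigma_n)$ is centrally normalizable over $D$.
   Context: All rings are associative with unity. $\mathcal{Z}(D)$ is the center of $D$ and $D_{\sigma}=\{r\in D:\sigma(r)=r\}$. For commuting automorphisms $\sigma_1,\ldots,\sigma_n$ of $D$, $D[t_1,\ldots,t_n;\sigma_1,\ldots,\sigma_n]$ denotes the skew polynomial ring in pairwise commuting variables with $t_ia=\sigma_i(a)t_i$ for $a\in D$. For a ring $S\supseteq D$, $a\in S$ is automorphic over $D$ with respect to $\tau\in\mathrm{Aut}(D)$ if $ab=\tau(b)a$ for all $b\in D$. $S$ is finite over a subring $R$ if finitely generated as a left $R$-module. Commuting $a_1,\ldots,a_m\in S$ are (left) algebraically independent over $D$ if the monomials in them are left linearly independent over $D$. $S$ is automorphically normalizable over $D$ if there exist $m\ge0$ and commuting $a_1,\ldots,a_m\in S$, automorphic over $D$ with respect to pairwise commuting automorphisms $\tau_1,\ldots,\tau_m$, left algebraically independent over $D$, with $S$ finite over the subring $D[a_1,\ldots,a_m]$ generated by $D\cup\{a_1,\ldots,a_m\}$;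 it is centrally normalizable if moreover the $\tau_i$ can be taken to be $\mathrm{id}_D$. A tuple $(\sigma_1,\ldots,\sigma_n)$ is automorphically (resp. centrally) normalizable over $D$ if every quotient of $D[t_1,\ldots,t_n;\sigma_1,\ldots,\sigma_n]$ by a proper two-sided ideal is automorphically (resp. centrally) normalizable over $D$. *)

theory Defs
  imports "HOL-Algebra.QuotRing" "HOL-Algebra.Generated_Rings"
begin

text \<open>The division ring D is the whole type 'a (class division_ring).
  Ring automorphisms of D: bijective, additive, multiplicative, unital.\<close>

definition ring_aut :: "('a::ring_1 \<Rightarrow> 'a) \<Rightarrow> bool" where
  "ring_aut f \<longleftrightarrow> bij f \<and> (\<forall>x y. f (x + y) = f x + f y)
     \<and> (\<forall>x y. f (x * y) = f x * f y) \<and> f 1 = 1"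

definition expvecs :: "nat \<Rightarrow> (nat \<Rightarrow> nat) set" where
  "expvecs n = {\<alpha>. \<forall>i\<ge>n. \<alpha> i = 0}"

fun spow :: "(nat \<Rightarrow> 'a \<Rightarrow> 'a) \<Rightarrow> nat \<Rightarrow> (nat \<Rightarrow> nat) \<Rightarrow> 'a \<Rightarrow> 'a" where
  "spow \<sigma> 0 \<alpha> = id"
| "spow \<sigma> (Suc k) \<alpha> = spow \<sigma> k \<alpha> \<circ> (\<sigma> k ^^ \<alpha> k)"

text \<open>Skew polynomials p = sum_alpha p(alpha) t^alpha (coefficients on the left),
  with t^alpha a = sigma^alpha(a) t^alpha and commuting variables, so
  (a t^alpha)(b t^beta) = a sigma^alpha(b) t^(alpha+beta).\<close>

definition skew_mult :: "(nat \<Rightarrow> 'a::ring_1 \<Rightarrow> 'a) \<Rightarrow> nat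
    \<Rightarrow> ((nat \<Rightarrow> nat) \<Rightarrow> 'a) \<Rightarrow> ((nat \<Rightarrow> nat) \<Rightarrow> 'a) \<Rightarrow> ((nat \<Rightarrow> nat) \<Rightarrow> 'a)" where
  "skew_mult \<sigma> n p q = (\<lambda>\<gamma>. \<Sum>\<alpha>\<in>{\<alpha>. p \<alpha> \<noteq> 0 \<and> (\<forall>i. \<alpha> i \<le> \<gamma> i)}.
       p \<alpha> * spow \<sigma> n \<alpha> (q (\<lambda>i. \<gamma> i - \<alpha> i)))"

definition skew_poly_ring :: "(nat \<Rightarrow> 'a::ring_1 \<Rightarrow> 'a) \<Rightarrow> nat \<Rightarrow> ((nat \<Rightarrow> nat) \<Rightarrow> 'a) ring" where
  "skew_poly_ring \<sigma> n =
    \<lparr>carrier = {p. finite {\<alpha>. p \<alpha> \<noteq> 0} \<and> (\<forall>\<alpha>. p \<alpha> \<noteq> 0 \<longrightarrow> \<alpha> \<in> expvecs n)},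
     mult = skew_mult \<sigma> n,
     one = (\<lambda>\<alpha>. if \<alpha> = (\<lambda>_. 0) then 1 else 0),
     zero = (\<lambda>_. 0),
     add = (\<lambda>p q \<alpha>. p \<alpha> + q \<alpha>)\<rparr>"

definition const_poly :: "'a::zero \<Rightarrow> ((nat \<Rightarrow> nat) \<Rightarrow> 'a)" where
  "const_poly d = (\<lambda>\<alpha>. if \<alpha> = (\<lambda>_. 0) then d else 0)"

fun smonom :: "('b, 'c) ring_scheme \<Rightarrow> (nat \<Rightarrow> 'b) \<Rightarrow> nat \<Rightarrow> (nat \<Rightarrow> nat) \<Rightarrow> 'b" where
  "smonom S a 0 \<alpha> = \<one>\<^bsub>S\<^esub>"
| "smonom S a (Suc k) \<alpha> = smonom S a k \<alpha> \<otimes>\<^bsub>S\<^esub> (a k [^]\<^bsub>S\<^esub> \<alpha> k)"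

definition normalizable_over ::
    "bool \<Rightarrow> ('b, 'c) ring_scheme \<Rightarrow> ('a::division_ring \<Rightarrow> 'b) \<Rightarrow> bool" where
  "normalizable_over central S \<iota> \<longleftrightarrow>
    (\<exists>(m::nat) (a::nat \<Rightarrow> 'b) (\<tau>::nat \<Rightarrow> 'a \<Rightarrow> 'a).
       (\<forall>i<m. a i \<in> carrier S)
     \<and> (\<forall>i<m. \<forall>j<m. a i \<otimes>\<^bsub>S\<^esub> a j = a j \<otimes>\<^bsub>S\<^esub> a i)
     \<and> (\<forall>i<m. ring_aut (\<tau> i))
     \<and> (\<forall>i<m. \<forall>j<m. \<tau> i \<circ> \<tau> j = \<tau> j \<circ> \<tau> i)
     \<and> (central \<longrightarrow> (\<forall>i<m. \<tau> i = id))
     \<and> (\<forall>i<m. \<forall>b. a i \<otimes>\<^bsub>S\<^esub> \<iota> b = \<iota> (\<tau> i b) \<otimes>\<^bsub>S\<^esub> a i)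
     \<and> (\<forall>c :: (nat \<Rightarrow> nat) \<Rightarrow> 'a.
          finite {\<alpha>. c \<alpha> \<noteq> 0} \<and> (\<forall>\<alpha>. c \<alpha> \<noteq> 0 \<longrightarrow> \<alpha> \<in> expvecs m)
          \<and> finsum S (\<lambda>\<alpha>. \<iota> (c \<alpha>) \<otimes>\<^bsub>S\<^esub> smonom S a m \<alpha>) {\<alpha>. c \<alpha> \<noteq> 0} = \<zero>\<^bsub>S\<^esub>
          \<longrightarrow> (\<forall>\<alpha>. c \<alpha> = 0))
     \<and> (\<exists>G. finite G \<and> G \<subseteq> carrier S \<and>
          (\<forall>s\<in>carrier S. \<exists>r. r \<in> G \<rightarrow> generate_ring S (range \<iota> \<union> a ` {..<m}) \<and>
              s = finsum S (\<lambda>g. r g \<otimes>\<^bsub>S\<^esub> g) G)))"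

abbreviation aut_normalizable_over where
  "aut_normalizable_over \<equiv> normalizable_over False"

abbreviation central_normalizable_over where
  "central_normalizable_over \<equiv> normalizable_over True"

definition tuple_normalizable :: "bool \<Rightarrow> nat \<Rightarrow> (nat \<Rightarrow> 'a::division_ring \<Rightarrow> 'a) \<Rightarrow> bool" where
  "tuple_normalizable central n \<sigma> \<longleftrightarrow>
    (\<forall>I. ideal I (skew_poly_ring \<sigma> n) \<and> I \<noteq> carrier (skew_poly_ring \<sigma> n) \<longrightarrow>
       normalizable_over central (skew_poly_ring \<sigma> n Quot I)
         (\<lambda>d. I +>\<^bsub>skew_poly_ring \<sigma> n\<^esub> const_poly d))"

abbreviation tuple_aut_normalizable where
  "tuple_aut_normalizable \<equiv> tuple_normalizable False"

abbreviation tuple_central_normalizable where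
  "tuple_central_normalizable \<equiv> tuple_normalizable True"

end

theory Submission
  imports Defs
begin

definition peval :: "nat \<Rightarrow> (nat \<Rightarrow> 'a::division_ring) \<Rightarrow> 'a \<Rightarrow> 'a" where
  "peval e a x = (\<Sum>j\<le>e. a j * x ^ j)"

lemma peval_Suc: "peval (Suc e) a x = a 0 + peval e (\<lambda>j. a (Suc j)) x * x"
  unfolding peval_def sum.atMost_Suc_shift sum_distrib_right
  by (simp add: power_Suc2 mult.assoc del: power_Suc)

lemma peval_0[simp]: "peval 0 a x = a 0"
  by (simp add: peval_def)

lemma peval_zero_coeffs: "(\<forall>j\<le>e. a j = 0) \<Longrightarrow> peval e a x = 0"
  by (simp add: peval_def)

lemma synth_div:
  fixes a :: "nat \<Rightarrow> 'a::division_ring"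
  assumes mu: "\<mu> \<in> F" and cen: "\<forall>x\<in>F. \<forall>y. x*y = y*x"
  shows "\<exists>b. (\<forall>x\<in>F. peval (Suc e) a x - peval (Suc e) a \<mu> = peval e b x * (x - \<mu>))
     \<and> ((\<forall>j\<le>e. b j = 0) \<longrightarrow> (\<forall>j. 1 \<le> j \<and> j \<le> Suc e \<longrightarrow> a j = 0))"
proof (induction e arbitrary: a)
  case 0
  show ?case
  proof (intro exI[of _ "\<lambda>_. a 1"] conjI ballI impI allI)
    fix x assume "x \<in> F"
    show "peval (Suc 0) a x - peval (Suc 0) a \<mu> = peval 0 (\<lambda>_. a 1) x * (x - \<mu>)"
      by (simp add: peval_Suc right_diff_distrib)
  next
    fix j assume h: "\<forall>j::nat\<le>0. a 1 = 0" and j: "1 \<le> j \<and> j \<le> Suc 0"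
    have "a 1 = 0" using h by (metis order.refl)
    with j show "a j = 0" by (cases "j = 1") auto
  qed
next
  case (Suc e)
  define a' where "a' = (\<lambda>j. a (Suc j))"
  obtain b' where b'1: "\<forall>x\<in>F. peval (Suc e) a' x - peval (Suc e) a' \<mu> = peval e b' x * (x - \<mu>)"
    and b'2: "(\<forall>j\<le>e. b' j = 0) \<longrightarrow> (\<forall>j. 1 \<le> j \<and> j \<le> Suc e \<longrightarrow> a' j = 0)"
    using Suc.IH by blast
  define b where "b = (\<lambda>j. if j = 0 then peval (Suc e) a' \<mu> else b' (j - 1))"
  have bs: "(\<lambda>j. b (Suc j)) = b'" by (simp add: b_def)
  show ?case
  proof (intro exI[of _ b] conjI ballI impI allI)
    fix x assume x: "x \<in> F"
    have xm: "x * \<mu> = \<mu> * x" using cen x by blast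
    let ?P = "peval (Suc e) a'"
    have "peval (Suc (Suc e)) a x - peval (Suc (Suc e)) a \<mu> = ?P x * x - ?P \<mu> * \<mu>"
      by (simp add: peval_Suc a'_def)
    also have "\<dots> = (?P x - ?P \<mu>) * x + ?P \<mu> * (x - \<mu>)"
      by (simp add: algebra_simps)
    also have "\<dots> = peval e b' x * ((x - \<mu>) * x) + ?P \<mu> * (x - \<mu>)"
      using b'1 x by (simp add: mult.assoc)
    also have "(x - \<mu>) * x = x * (x - \<mu>)" using xm by (simp add: algebra_simps)
    also have "peval e b' x * (x * (x - \<mu>)) + ?P \<mu> * (x - \<mu>) = (?P \<mu> + peval e b' x * x) * (x - \<mu>)"
      by (simp add: algebra_simps)
    also have "?P \<mu> + peval e b' x * x = peval (Suc e) b x"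
      unfolding peval_Suc[of e b] bs by (simp add: b_def)
    finally show "peval (Suc (Suc e)) a x - peval (Suc (Suc e)) a \<mu> = peval (Suc e) b x * (x - \<mu>)" .
  next
    fix j assume bz: "\<forall>j\<le>Suc e. b j = 0" and j: "1 \<le> j \<and> j \<le> Suc (Suc e)"
    have "\<forall>j\<le>e. b' j = 0" using bz by (simp add: b_def) (metis Suc_le_mono diff_Suc_1 nat.distinct(1))
    then have a'z: "\<forall>j. 1 \<le> j \<and> j \<le> Suc e \<longrightarrow> a' j = 0" using b'2 by blast
    have "b 0 = 0" using bz by blast
    then have "peval (Suc e) a' \<mu> = 0" by (simp add: b_def)
    moreover have "peval (Suc e) a' \<mu> = a' 0"
      using a'z by (simp add: peval_Suc peval_zero_coeffs)
    ultimately have "a' 0 = 0" by simp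
    then show "a j = 0" using a'z j unfolding a'_def
      by (metis One_nat_def Suc_le_D Suc_le_mono le_zero_eq not_less_eq_eq)
  qed
qed

lemma peval_vanish:
  fixes a :: "nat \<Rightarrow> 'a::division_ring"
  assumes "infinite F" "\<forall>x\<in>F. \<forall>y. x*y = y*x" "\<forall>x\<in>F. peval e a x = 0"
  shows "\<forall>j\<le>e. a j = 0"
  using assms
proof (induction e arbitrary: a F)
  case 0
  then obtain x where "x \<in> F" by (metis ex_in_conv finite.emptyI)
  then show ?case using 0(3) by force
next
  case (Suc e)
  then obtain \<mu> where mu: "\<mu> \<in> F" by (metis ex_in_conv finite.emptyI)
  obtain b where b1: "\<forall>x\<in>F. peval (Suc e) a x - peval (Suc e) a \<mu> = peval e b x * (x - \<mu>)"
    and b2: "(\<forall>j\<le>e. b j = 0) \<longrightarrow> (\<forall>j. 1 \<le> j \<and> j \<le> Suc e \<longrightarrow> a j = 0)"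
    using synth_div[OF mu Suc.prems(2)] by blast
  have "\<forall>x\<in>F - {\<mu>}. peval e b x = 0"
  proof
    fix x assume x: "x \<in> F - {\<mu>}"
    then have "peval e b x * (x - \<mu>) = peval (Suc e) a x - peval (Suc e) a \<mu>" using b1 by simp
    also have "\<dots> = 0" using Suc.prems(3) mu x by simp
    finally have "peval e b x * (x - \<mu>) = 0" .
    moreover have "x - \<mu> \<noteq> 0" using x by simp
    ultimately show "peval e b x = 0" by simp
  qed
  moreover have "infinite (F - {\<mu>})" using Suc.prems(1) by simp
  moreover have "\<forall>x\<in>F - {\<mu>}. \<forall>y. x*y = y*x" using Suc.prems(2) by blast
  ultimately have "\<forall>j\<le>e. b j = 0" using Suc.IH by blast
  then have az: "\<forall>j. 1 \<le> j \<and> j \<le> Suc e \<longrightarrow> a j = 0" using b2 by blast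
  have "peval (Suc e) a \<mu> = a 0" using az by (simp add: peval_Suc peval_zero_coeffs)
  then have "a 0 = 0" using Suc.prems(3) mu by simp
  then show ?case using az by (metis One_nat_def not_less_eq_eq le_zero_eq)
qed

lemma uni_nonroot:
  fixes a :: "nat \<Rightarrow> 'a::division_ring"
  assumes "infinite F" "\<forall>x\<in>F. \<forall>y. x*y = y*x" "finite J" "j0 \<in> J" "a j0 \<noteq> 0"
  shows "\<exists>\<mu>\<in>F. (\<Sum>j\<in>J. a j * \<mu> ^ j) \<noteq> 0"
proof (rule ccontr)
  assume "\<not> ?thesis"
  then have h: "\<forall>\<mu>\<in>F. (\<Sum>j\<in>J. a j * \<mu> ^ j) = 0" by blast
  define e where "e = Max J"
  define a' where "a' = (\<lambda>j. if j \<in> J then a j else 0)"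
  have "\<forall>\<mu>\<in>F. peval e a' \<mu> = 0"
  proof
    fix \<mu> assume "\<mu> \<in> F"
    have "(\<Sum>j\<in>J. a j * \<mu> ^ j) = peval e a' \<mu>" unfolding peval_def
      by (rule sum.mono_neutral_cong_left) (use assms(3) in \<open>auto simp: a'_def e_def\<close>)
    then show "peval e a' \<mu> = 0" using h \<open>\<mu> \<in> F\<close> by simp
  qed
  then have "\<forall>j\<le>e. a' j = 0" using peval_vanish assms(1,2) by blast
  moreover have "j0 \<le> e" using assms(3,4) by (simp add: e_def)
  ultimately show False using assms(4,5) by (auto simp: a'_def)
qed

fun dmon :: "(nat \<Rightarrow> 'a::ring_1) \<Rightarrow> nat \<Rightarrow> (nat \<Rightarrow> nat) \<Rightarrow> 'a" where
  "dmon l 0 \<alpha> = 1"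
| "dmon l (Suc k) \<alpha> = dmon l k \<alpha> * l k ^ \<alpha> k"

definition trunc :: "nat \<Rightarrow> (nat \<Rightarrow> nat) \<Rightarrow> (nat \<Rightarrow> nat)" where
  "trunc k \<alpha> = (\<lambda>i. if i < k then \<alpha> i else 0)"

lemma dmon_cong: "(\<forall>i<k. l i = l' i) \<Longrightarrow> dmon l k \<alpha> = dmon l' k \<alpha>"
  by (induction k) auto

lemma mv_nonroot:
  fixes c :: "(nat \<Rightarrow> nat) \<Rightarrow> 'a::division_ring"
  assumes inf: "infinite F" and cen: "\<forall>x\<in>F. \<forall>y. x*y = y*x"
  shows "finite B \<Longrightarrow> B \<noteq> {} \<Longrightarrow> \<forall>\<alpha>\<in>B. c \<alpha> \<noteq> 0 \<Longrightarrow> inj_on (trunc k) B \<Longrightarrow>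
     \<exists>l. (\<forall>i<k. l i \<in> F) \<and> (\<Sum>\<alpha>\<in>B. c \<alpha> * dmon l k \<alpha>) \<noteq> 0"
proof (induction k arbitrary: B)
  case 0
  obtain \<alpha> where a: "\<alpha> \<in> B" using 0 by blast
  have "B = {\<alpha>}"
  proof (intro equalityI subsetI)
    fix \<beta> assume "\<beta> \<in> B"
    moreover have "trunc 0 \<beta> = trunc 0 \<alpha>" by (simp add: trunc_def)
    ultimately show "\<beta> \<in> {\<alpha>}" using 0(4) a by (auto dest: inj_onD)
  qed (use a in auto)
  then show ?case using 0(3) by simp
next
  case (Suc k)
  obtain \<alpha>0 where a0: "\<alpha>0 \<in> B" using Suc by blast
  define B0 where "B0 = {\<alpha> \<in> B. \<alpha> k = \<alpha>0 k}"
  have "inj_on (trunc k) B0"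
  proof (rule inj_onI)
    fix \<alpha> \<beta> assume "\<alpha> \<in> B0" "\<beta> \<in> B0" "trunc k \<alpha> = trunc k \<beta>"
    then have "trunc (Suc k) \<alpha> = trunc (Suc k) \<beta>" "\<alpha> \<in> B" "\<beta> \<in> B"
      unfolding B0_def trunc_def by (auto simp: fun_eq_iff less_Suc_eq split: if_splits)
    then show "\<alpha> = \<beta>" using Suc.prems(4) by (auto dest: inj_onD)
  qed
  moreover have "finite B0" "B0 \<noteq> {}" "\<forall>\<alpha>\<in>B0. c \<alpha> \<noteq> 0"
    using Suc.prems a0 by (auto simp: B0_def)
  ultimately obtain l0 where l0: "\<forall>i<k. l0 i \<in> F" "(\<Sum>\<alpha>\<in>B0. c \<alpha> * dmon l0 k \<alpha>) \<noteq> 0"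
    using Suc.IH by blast
  define a where "a = (\<lambda>j. \<Sum>\<alpha>\<in>{\<alpha> \<in> B. \<alpha> k = j}. c \<alpha> * dmon l0 k \<alpha>)"
  have "a (\<alpha>0 k) \<noteq> 0" using l0(2) by (simp add: a_def B0_def)
  then obtain \<mu> where mu: "\<mu> \<in> F" "(\<Sum>j\<in>(\<lambda>\<alpha>. \<alpha> k) ` B. a j * \<mu> ^ j) \<noteq> 0"
    using uni_nonroot[OF inf cen, of "(\<lambda>\<alpha>. \<alpha> k) ` B" "\<alpha>0 k" a] Suc.prems(1) a0 by blast
  define l where "l = l0(k := \<mu>)"
  have "(\<Sum>\<alpha>\<in>B. c \<alpha> * dmon l (Suc k) \<alpha>) = (\<Sum>\<alpha>\<in>B. c \<alpha> * dmon l0 k \<alpha> * \<mu> ^ \<alpha> k)"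
  proof (rule sum.cong)
    fix \<alpha> assume "\<alpha> \<in> B"
    have "dmon l k \<alpha> = dmon l0 k \<alpha>" by (rule dmon_cong) (simp add: l_def)
    then show "c \<alpha> * dmon l (Suc k) \<alpha> = c \<alpha> * dmon l0 k \<alpha> * \<mu> ^ \<alpha> k"
      by (simp add: l_def mult.assoc)
  qed simp
  also have "\<dots> = (\<Sum>j\<in>(\<lambda>\<alpha>. \<alpha> k) ` B. \<Sum>\<alpha>\<in>{\<alpha> \<in> B. \<alpha> k = j}. c \<alpha> * dmon l0 k \<alpha> * \<mu> ^ \<alpha> k)"
    by (rule sum.group[symmetric]) (use Suc.prems(1) in auto)
  also have "\<dots> = (\<Sum>j\<in>(\<lambda>\<alpha>. \<alpha> k) ` B. a j * \<mu> ^ j)"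
    unfolding a_def sum_distrib_right by (rule sum.cong) auto
  finally have "(\<Sum>\<alpha>\<in>B. c \<alpha> * dmon l (Suc k) \<alpha>) \<noteq> 0" using mu by simp
  moreover have "\<forall>i<Suc k. l i \<in> F" using l0(1) mu(1) by (simp add: l_def less_Suc_eq)
  ultimately show ?case by blast
qed

inductive_set lspan :: "('b,'c) ring_scheme \<Rightarrow> 'b set \<Rightarrow> 'b set \<Rightarrow> 'b set" for S A K where
  lzero: "\<zero>\<^bsub>S\<^esub> \<in> lspan S A K"
| lgen: "a \<in> A \<Longrightarrow> x \<in> K \<Longrightarrow> a \<otimes>\<^bsub>S\<^esub> x \<in> lspan S A K"
| ladd: "u \<in> lspan S A K \<Longrightarrow> v \<in> lspan S A K \<Longrightarrow> u \<oplus>\<^bsub>S\<^esub> v \<in> lspan S A K"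

context ring
begin

lemma lspan_carrier: assumes "A \<subseteq> carrier R" "K \<subseteq> carrier R"
  shows "u \<in> lspan R A K \<Longrightarrow> u \<in> carrier R"
  by (induction rule: lspan.induct) (use assms in auto)

lemma lspan_mono: assumes "K \<subseteq> K'" shows "u \<in> lspan R A K \<Longrightarrow> u \<in> lspan R A K'"
  by (induction rule: lspan.induct) (use assms in \<open>auto intro: lspan.intros\<close>)

lemma lspan_lmult:
  assumes A: "subring A R" and K: "K \<subseteq> carrier R" and b: "b \<in> A"
  shows "u \<in> lspan R A K \<Longrightarrow> b \<otimes> u \<in> lspan R A K"
proof (induction rule: lspan.induct)
  have bc: "b \<in> carrier R" using subringE(1)[OF A] b by blast
  { case lzero show ?case using bc by (simp add: lspan.lzero) }
  { case (lgen a x)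
    then have "a \<in> carrier R" "x \<in> carrier R" using subringE(1)[OF A] K by auto
    then have "b \<otimes> (a \<otimes> x) = (b \<otimes> a) \<otimes> x" using bc by (simp add: m_assoc)
    moreover have "b \<otimes> a \<in> A" using subringE(6)[OF A b lgen(1)] .
    ultimately show ?case using lgen(2) by (simp add: lspan.lgen) }
  { case (ladd u v)
    have "u \<in> carrier R" "v \<in> carrier R"
      using ladd(1,2) lspan_carrier[OF subringE(1)[OF A] K] by auto
    then have "b \<otimes> (u \<oplus> v) = b \<otimes> u \<oplus> b \<otimes> v" using bc by (simp add: r_distr)
    then show ?case using ladd(3,4) by (simp add: lspan.ladd) }
qed

lemma lspan_neg:
  assumes A: "subring A R" and K: "K \<subseteq> carrier R"
  shows "u \<in> lspan R A K \<Longrightarrow> \<ominus> u \<in> lspan R A K"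
proof -
  assume u: "u \<in> lspan R A K"
  have "\<ominus> \<one> \<otimes> u \<in> lspan R A K"
    by (rule lspan_lmult[OF A K _ u]) (simp add: subringE(3,5)[OF A])
  moreover have "u \<in> carrier R" using lspan_carrier[OF subringE(1)[OF A] K u] .
  ultimately show ?thesis by (simp add: l_minus)
qed

lemma lspan_rmult:
  assumes A: "A \<subseteq> carrier R" and K: "K \<subseteq> carrier R" and c: "c \<in> carrier R"
    and h: "\<And>a x. a \<in> A \<Longrightarrow> x \<in> K \<Longrightarrow> (a \<otimes> x) \<otimes> c \<in> lspan R A' K'"
  shows "u \<in> lspan R A K \<Longrightarrow> u \<otimes> c \<in> lspan R A' K'"
proof (induction rule: lspan.induct)
  case lzero then show ?case using c by (simp add: lspan.lzero)
next
  case (lgen a x) then show ?case using h by blast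
next
  case (ladd u v)
  have "u \<in> carrier R" "v \<in> carrier R" using ladd(1,2) lspan_carrier[OF A K] by auto
  then have "(u \<oplus> v) \<otimes> c = u \<otimes> c \<oplus> v \<otimes> c" using c by (simp add: l_distr)
  then show ?case using ladd(3,4) by (simp add: lspan.ladd)
qed

lemma lspan_trans:
  assumes A: "subring A R" and H: "H \<subseteq> carrier R" and K: "K \<subseteq> carrier R"
    and B: "B \<subseteq> lspan R A H"
  shows "u \<in> lspan R B K \<Longrightarrow> u \<in> lspan R A {h \<otimes> x |h x. h \<in> H \<and> x \<in> K}"
proof (induction rule: lspan.induct)
  case lzero then show ?case by (rule lspan.lzero)
next
  case (lgen b x)
  have x: "x \<in> carrier R" using lgen K by auto
  have Ac: "A \<subseteq> carrier R" using subringE(1)[OF A] .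
  have "b \<in> lspan R A H" using B lgen by auto
  then show ?case
  proof (induction rule: lspan.induct)
    case lzero then show ?case using x by (simp add: lspan.lzero)
  next
    case (lgen a h)
    then have "a \<in> carrier R" "h \<in> carrier R" using Ac H by auto
    then have "(a \<otimes> h) \<otimes> x = a \<otimes> (h \<otimes> x)" using x by (simp add: m_assoc)
    moreover have "h \<otimes> x \<in> {h \<otimes> x |h x. h \<in> H \<and> x \<in> K}" using lgen(2) \<open>x \<in> K\<close> by blast
    ultimately show ?case using lgen(1) by (simp add: lspan.lgen)
  next
    case (ladd u v)
    have "u \<in> carrier R" "v \<in> carrier R" using ladd(1,2) lspan_carrier[OF Ac H] by auto
    then have "(u \<oplus> v) \<otimes> x = u \<otimes> x \<oplus> v \<otimes> x" using x by (simp add: l_distr)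
    then show ?case using ladd(3,4) by (simp add: lspan.ladd)
  qed
next
  case (ladd u v) then show ?case by (simp add: lspan.ladd)
qed

lemma generate_ring_rmult_closed:
  assumes gens: "gens \<subseteq> carrier R" and M: "M \<subseteq> carrier R" and one: "\<one> \<in> M"
    and add: "\<And>x y. x \<in> M \<Longrightarrow> y \<in> M \<Longrightarrow> x \<oplus> y \<in> M"
    and neg: "\<And>x. x \<in> M \<Longrightarrow> \<ominus> x \<in> M"
    and mul: "\<And>x g. x \<in> M \<Longrightarrow> g \<in> gens \<Longrightarrow> x \<otimes> g \<in> M"
  shows "generate_ring R gens \<subseteq> M"
proof -
  define T where "T = {y \<in> carrier R. \<forall>x\<in>M. x \<otimes> y \<in> M}"
  have "y \<in> T" if "y \<in> generate_ring R gens" for y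
    using that
  proof (induction rule: generate_ring.induct)
    case one then show ?case using M by (auto simp: T_def)
  next
    case (incl h) then show ?case using gens mul by (auto simp: T_def)
  next
    case (a_inv h) then show ?case using M neg by (auto simp: T_def r_minus)
  next
    case (eng_add h1 h2) then show ?case using M add by (auto simp: T_def r_distr)
  next
    case (eng_mult h1 h2)
    then show ?case using M by (auto simp: T_def simp flip: m_assoc)
  qed
  then show ?thesis using one by (force simp: T_def)
qed

lemma lspan_finsum:
  assumes A: "subring A R" and G: "finite G" "G \<subseteq> carrier R"
  shows "u \<in> lspan R A G \<Longrightarrow> \<exists>r. r \<in> G \<rightarrow> A \<and> u = finsum R (\<lambda>g. r g \<otimes> g) G"
proof (induction rule: lspan.induct)
  have Ac: "A \<subseteq> carrier R" using subringE(1)[OF A] .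
  { case lzero
    show ?case
    proof (rule exI[of _ "\<lambda>_. \<zero>"], rule conjI)
      have "finsum R (\<lambda>g. \<zero> \<otimes> g) G = finsum R (\<lambda>g. \<zero>) G"
        by (rule finsum_cong') (use G in auto)
      then show "\<zero> = finsum R (\<lambda>g. \<zero> \<otimes> g) G" by (simp add: finsum_zero)
    qed (use subringE(2)[OF A] in auto) }
  { case (lgen a x)
    define r where "r = (\<lambda>g. if g = x then a else \<zero>)"
    have "r \<in> G \<rightarrow> A" using lgen subringE(2)[OF A] by (auto simp: r_def)
    moreover have "finsum R (\<lambda>g. r g \<otimes> g) G = a \<otimes> x"
    proof -
      have Gx: "G = insert x (G - {x})" using lgen by auto
      have "finsum R (\<lambda>g. r g \<otimes> g) G = r x \<otimes> x \<oplus> finsum R (\<lambda>g. r g \<otimes> g) (G - {x})"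
        by (subst Gx, rule finsum_insert) (use G lgen Ac in \<open>auto simp: r_def\<close>)
      also have "finsum R (\<lambda>g. r g \<otimes> g) (G - {x}) = finsum R (\<lambda>g. \<zero>) (G - {x})"
        by (rule finsum_cong') (use G in \<open>auto simp: r_def\<close>)
      moreover have ac: "a \<otimes> x \<in> carrier R" using lgen G Ac by blast
      ultimately show ?thesis by (simp add: r_def finsum_zero)
    qed
    ultimately show ?case by metis }
  { case (ladd u v)
    then obtain r1 r2 where r: "r1 \<in> G \<rightarrow> A" "u = finsum R (\<lambda>g. r1 g \<otimes> g) G"
       "r2 \<in> G \<rightarrow> A" "v = finsum R (\<lambda>g. r2 g \<otimes> g) G" by blast
    have rc: "\<And>g. g \<in> G \<Longrightarrow> r1 g \<in> carrier R \<and> r2 g \<in> carrier R" using r Ac by blast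
    have "u \<oplus> v = finsum R (\<lambda>g. (r1 g \<oplus> r2 g) \<otimes> g) G"
    proof -
      have "finsum R (\<lambda>g. (r1 g \<oplus> r2 g) \<otimes> g) G = finsum R (\<lambda>g. r1 g \<otimes> g \<oplus> r2 g \<otimes> g) G"
        by (rule finsum_cong') (use rc G in \<open>auto simp: l_distr\<close>)
      also have "\<dots> = u \<oplus> v" unfolding r
        by (rule finsum_addf) (use rc G in auto)
      finally show ?thesis by simp
    qed
    moreover have "(\<lambda>g. r1 g \<oplus> r2 g) \<in> G \<rightarrow> A" using r subringE(7)[OF A] by auto
    ultimately show ?case by blast }
qed

end

locale nnsetup = ring S for S :: "('b,'c) ring_scheme" (structure) +
  fixes \<iota> :: "'a::division_ring \<Rightarrow> 'b" and \<theta> :: "'a \<Rightarrow> 'a" and F :: "'a set"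
  assumes \<iota>_carr[simp]: "\<iota> x \<in> carrier S"
    and \<iota>_add: "\<iota> (x + y) = \<iota> x \<oplus> \<iota> y"
    and \<iota>_mult: "\<iota> (x * y) = \<iota> x \<otimes> \<iota> y"
    and \<iota>_one: "\<iota> 1 = \<one>"
    and nontriv: "\<one> \<noteq> \<zero>"
    and \<theta>_one: "\<theta> 1 = 1"
    and F_inf: "infinite F"
    and F_cen: "\<forall>x\<in>F. \<forall>y. x * y = y * x"
    and F_fix: "\<forall>x\<in>F. \<theta> x = x"
begin

lemma \<iota>_zero[simp]: "\<iota> 0 = \<zero>"
proof -
  have "\<iota> 0 \<oplus> \<iota> 0 = \<iota> 0" using \<iota>_add[of 0 0] by simp
  then show ?thesis by simp
qed

lemma \<iota>_neg: "\<iota> (- x) = \<ominus> \<iota> x"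
proof -
  have "\<iota> (- x) \<oplus> \<iota> x = \<zero>" using \<iota>_add[of "-x" x] by simp
  then show ?thesis by (metis \<iota>_carr minus_equality)
qed

lemma \<iota>_inj0: "\<iota> x = \<zero> \<Longrightarrow> x = 0"
proof (rule ccontr)
  assume h: "\<iota> x = \<zero>" "x \<noteq> 0"
  have "\<one> = \<iota> (inverse x * x)" using h(2) \<iota>_one by simp
  also have "\<dots> = \<zero>" using h(1) by (simp add: \<iota>_mult)
  finally show False using nontriv by simp
qed

definition Dg :: "(nat \<Rightarrow> 'b) \<Rightarrow> nat \<Rightarrow> 'b set" where
  "Dg z k = generate_ring S (range \<iota> \<union> z ` {..<k})"

definition autom :: "(nat \<Rightarrow> 'b) \<Rightarrow> nat \<Rightarrow> bool" where
  "autom z k \<longleftrightarrow> (\<forall>i<k. z i \<in> carrier S) \<and> (\<forall>i<k. \<forall>j<k. z i \<otimes> z j = z j \<otimes> z i)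
     \<and> (\<forall>i<k. \<forall>b. z i \<otimes> \<iota> b = \<iota> (\<theta> b) \<otimes> z i)"

definition indep :: "(nat \<Rightarrow> 'b) \<Rightarrow> nat \<Rightarrow> bool" where
  "indep z k \<longleftrightarrow> (\<forall>c :: (nat \<Rightarrow> nat) \<Rightarrow> 'a.
          finite {\<alpha>. c \<alpha> \<noteq> 0} \<and> (\<forall>\<alpha>. c \<alpha> \<noteq> 0 \<longrightarrow> \<alpha> \<in> expvecs k)
          \<and> finsum S (\<lambda>\<alpha>. \<iota> (c \<alpha>) \<otimes> smonom S z k \<alpha>) {\<alpha>. c \<alpha> \<noteq> 0} = \<zero>
          \<longrightarrow> (\<forall>\<alpha>. c \<alpha> = 0))"

lemma Dg_gens: "autom z k \<Longrightarrow> range \<iota> \<union> z ` {..<k} \<subseteq> carrier S"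
  by (auto simp: autom_def)

lemma Dg_subring: "autom z k \<Longrightarrow> subring (Dg z k) S"
  unfolding Dg_def by (rule generate_ring_is_subring[OF Dg_gens])

lemma Dg_carrier: "autom z k \<Longrightarrow> Dg z k \<subseteq> carrier S"
  using Dg_subring subringE(1) by blast

lemma Dg_\<iota>: "\<iota> b \<in> Dg z k"
  unfolding Dg_def by (rule generate_ring.incl) auto

lemma Dg_z: "i < k \<Longrightarrow> z i \<in> Dg z k"
  unfolding Dg_def by (rule generate_ring.incl) auto

lemma smonom_carrier: "(\<forall>i<m. z i \<in> carrier S) \<Longrightarrow> smonom S z m \<alpha> \<in> carrier S"
  by (induction m) auto

lemma indep0: "indep z 0"
  unfolding indep_def
proof (intro allI impI)
  fix c :: "(nat \<Rightarrow> nat) \<Rightarrow> 'a" and \<alpha>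
  assume h: "finite {\<alpha>. c \<alpha> \<noteq> 0} \<and> (\<forall>\<alpha>. c \<alpha> \<noteq> 0 \<longrightarrow> \<alpha> \<in> expvecs 0)
          \<and> finsum S (\<lambda>\<alpha>. \<iota> (c \<alpha>) \<otimes> smonom S z 0 \<alpha>) {\<alpha>. c \<alpha> \<noteq> 0} = \<zero>"
  show "c \<alpha> = 0"
  proof (rule ccontr)
    assume "c \<alpha> \<noteq> 0"
    then have "\<alpha> = (\<lambda>_. 0)" using h by (auto simp: expvecs_def)
    have sub: "{\<alpha>. c \<alpha> \<noteq> 0} = {\<lambda>_. 0}"
      using h \<open>c \<alpha> \<noteq> 0\<close> \<open>\<alpha> = (\<lambda>_. 0)\<close> by (auto simp: expvecs_def fun_eq_iff)
    have "finsum S (\<lambda>\<alpha>. \<iota> (c \<alpha>) \<otimes> smonom S z 0 \<alpha>) {\<alpha>. c \<alpha> \<noteq> 0} = \<iota> (c (\<lambda>_. 0))"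
      unfolding sub by (simp add: finsum_insert)
    then have "\<iota> (c (\<lambda>_. 0)) = \<zero>" using h by simp
    then show False using \<iota>_inj0 \<open>c \<alpha> \<noteq> 0\<close> \<open>\<alpha> = (\<lambda>_. 0)\<close> by blast
  qed
qed

definition commS :: "'b \<Rightarrow> 'b \<Rightarrow> bool" where "commS x y \<longleftrightarrow> x \<otimes> y = y \<otimes> x"

lemma commS_add: "x \<in> carrier S \<Longrightarrow> a \<in> carrier S \<Longrightarrow> b \<in> carrier S \<Longrightarrow> commS x a \<Longrightarrow> commS x b \<Longrightarrow> commS x (a \<oplus> b)"
  by (simp add: commS_def r_distr l_distr)

lemma commS_neg: "x \<in> carrier S \<Longrightarrow> a \<in> carrier S \<Longrightarrow> commS x a \<Longrightarrow> commS x (\<ominus> a)"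
  by (simp add: commS_def r_minus l_minus)

lemma commS_minus: "x \<in> carrier S \<Longrightarrow> a \<in> carrier S \<Longrightarrow> b \<in> carrier S \<Longrightarrow> commS x a \<Longrightarrow> commS x b \<Longrightarrow> commS x (a \<ominus> b)"
  by (simp add: minus_eq commS_add commS_neg)

lemma commS_mult: "x \<in> carrier S \<Longrightarrow> a \<in> carrier S \<Longrightarrow> b \<in> carrier S \<Longrightarrow> commS x a \<Longrightarrow> commS x b \<Longrightarrow> commS x (a \<otimes> b)"
  unfolding commS_def by (metis m_assoc)

lemma commS_sym: "commS x y \<Longrightarrow> commS y x"
  by (simp add: commS_def)

lemma commS_pow: "x \<in> carrier S \<Longrightarrow> a \<in> carrier S \<Longrightarrow> commS x a \<Longrightarrow> commS x (a [^] (j::nat))"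
proof (induction j)
  case (Suc j)
  then show ?case using commS_mult[of x "a [^] j" a] by simp
qed (simp add: commS_def)

lemma theta_pow_fix: "\<theta> x = x \<Longrightarrow> (\<theta> ^^ j) x = x"
  by (induction j) auto

end

context ring begin
lemma l_minus_distr: "a \<in> carrier R \<Longrightarrow> b \<in> carrier R \<Longrightarrow> c \<in> carrier R \<Longrightarrow> (a \<ominus> b) \<otimes> c = a \<otimes> c \<ominus> b \<otimes> c"
  by (simp add: minus_eq l_distr l_minus)
lemma r_minus_distr: "a \<in> carrier R \<Longrightarrow> b \<in> carrier R \<Longrightarrow> c \<in> carrier R \<Longrightarrow> c \<otimes> (a \<ominus> b) = c \<otimes> a \<ominus> c \<otimes> b"
  by (simp add: minus_eq r_distr r_minus)
end

locale nnstep = nnsetup +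
  fixes z and k :: nat and l
  assumes aut: "autom z (Suc k)" and lF: "\<forall>i<k. l i \<in> F"
begin

definition "ww = z k"
definition "lp i = (if i < k then l i else 1)"
definition "zz i = (if i < k then z i \<ominus> \<iota> (l i) \<otimes> ww else \<zero>)"
definition "Dz = Dg zz k"
definition VV :: "nat \<Rightarrow> _" where "VV p = lspan S Dz ((\<lambda>j. ww [^] (j::nat)) ` {..<p})"

lemma z_carr: "i < Suc k \<Longrightarrow> z i \<in> carrier S" using aut by (simp add: autom_def)
lemma ww_carr[simp]: "ww \<in> carrier S" using z_carr by (simp add: ww_def)
lemma z_comm: "i < Suc k \<Longrightarrow> j < Suc k \<Longrightarrow> z i \<otimes> z j = z j \<otimes> z i"
  using aut by (simp add: autom_def)
lemma z_aut: "i < Suc k \<Longrightarrow> z i \<otimes> \<iota> b = \<iota> (\<theta> b) \<otimes> z i"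
  using aut by (simp add: autom_def)
lemma lp_fix: "\<theta> (lp i) = lp i"
  using lF F_fix \<theta>_one by (simp add: lp_def)
lemma lp_cen: "lp i * y = y * lp i"
  using lF F_cen by (simp add: lp_def)
lemma lp_l: "i < k \<Longrightarrow> lp i = l i" by (simp add: lp_def)
lemma zz_carr[simp]: "zz i \<in> carrier S"
  using z_carr by (simp add: zz_def)

lemma z_decomp: "i < Suc k \<Longrightarrow> z i = zz i \<oplus> \<iota> (lp i) \<otimes> ww"
proof (cases "i < k")
  case True
  assume "i < Suc k"
  have c: "z i \<in> carrier S" "\<iota> (l i) \<otimes> ww \<in> carrier S" using True z_carr by auto
  show ?thesis using True c by (simp add: zz_def lp_def minus_eq a_assoc l_neg)
next
  case False
  assume "i < Suc k"
  then have "i = k" using False by simp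
  then show ?thesis by (simp add: zz_def lp_def \<iota>_one ww_def z_carr)
qed

lemma comm_z_lp: "i < Suc k \<Longrightarrow> commS (z i) (\<iota> (lp j))"
  by (simp add: commS_def z_aut lp_fix)

lemma comm_lp_lp: "commS (\<iota> (lp i)) (\<iota> (lp j))"
  using lp_cen[of i "lp j"] by (simp add: commS_def flip: \<iota>_mult)

lemma comm_lp_z: "i < Suc k \<Longrightarrow> commS (\<iota> (lp j)) (z i)"
  using comm_z_lp commS_sym by blast

lemma zz_struct: "i < k \<Longrightarrow> zz i = z i \<ominus> \<iota> (lp i) \<otimes> z k"
  by (simp add: zz_def lp_def ww_def)

lemma comm_z_zz: "j < Suc k \<Longrightarrow> commS (z j) (zz i)"
proof (cases "i < k")
  case True
  assume j: "j < Suc k"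
  have c: "z j \<in> carrier S" "z i \<in> carrier S" "z k \<in> carrier S" using j True z_carr by auto
  have "commS (z j) (z i)" "commS (z j) (z k)" using j True z_comm by (auto simp: commS_def)
  moreover have "commS (z j) (\<iota> (lp i))" using comm_z_lp j by blast
  ultimately have "commS (z j) (\<iota> (lp i) \<otimes> z k)" using c by (intro commS_mult) auto
  then show ?thesis unfolding zz_struct[OF True] using c \<open>commS (z j) (z i)\<close>
    by (intro commS_minus) auto
next
  case False
  assume "j < Suc k"
  then show ?thesis using False z_carr[of j] by (simp add: zz_def commS_def)
qed

lemma comm_lp_zz: "commS (\<iota> (lp j)) (zz i)"
proof (cases "i < k")
  case True
  have c: "z i \<in> carrier S" "z k \<in> carrier S" using True z_carr by auto
  have "commS (\<iota> (lp j)) (z i)" "commS (\<iota> (lp j)) (z k)" using True comm_lp_z by auto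
  moreover have "commS (\<iota> (lp j)) (\<iota> (lp i))" using comm_lp_lp by blast
  ultimately show ?thesis unfolding zz_struct[OF True] using c
    by (intro commS_minus commS_mult) auto
next
  case False
  then show ?thesis by (simp add: zz_def commS_def)
qed

lemma comm_zz_zz: "commS (zz j) (zz i)"
proof (cases "j < k")
  case True
  have c: "z j \<in> carrier S" "z k \<in> carrier S" using True z_carr by auto
  have "commS (zz i) (z j)" "commS (zz i) (z k)" using True comm_z_zz commS_sym by auto
  moreover have "commS (zz i) (\<iota> (lp j))" using comm_lp_zz commS_sym by blast
  ultimately have "commS (zz i) (zz j)" unfolding zz_struct[OF True] using c
    by (intro commS_minus commS_mult) auto
  then show ?thesis by (rule commS_sym)
next
  case False
  then show ?thesis using zz_carr[of i] by (simp add: zz_def commS_def)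
qed

lemma comm_zz_ww: "commS (zz i) ww"
  using comm_z_zz[of k i] commS_sym by (simp add: ww_def)

lemma comm_lp_ww: "commS (\<iota> (lp i)) ww"
  using comm_lp_z[of k i] by (simp add: ww_def)

lemma zz_aut: "zz i \<otimes> \<iota> b = \<iota> (\<theta> b) \<otimes> zz i"
proof (cases "i < k")
  case True
  have e1: "ww \<otimes> \<iota> b = \<iota> (\<theta> b) \<otimes> ww" using z_aut[of k b] by (simp add: ww_def)
  have e2: "\<iota> (l i) \<otimes> \<iota> (\<theta> b) = \<iota> (\<theta> b) \<otimes> \<iota> (l i)"
    using lp_cen[of i "\<theta> b"] True by (simp add: lp_def flip: \<iota>_mult)
  have zi: "z i \<in> carrier S" using True z_carr by simp
  have "zz i \<otimes> \<iota> b = z i \<otimes> \<iota> b \<ominus> \<iota> (l i) \<otimes> (ww \<otimes> \<iota> b)"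
    using True zi by (simp add: zz_def l_minus_distr m_assoc)
  also have "\<dots> = \<iota> (\<theta> b) \<otimes> z i \<ominus> (\<iota> (l i) \<otimes> \<iota> (\<theta> b)) \<otimes> ww"
    using True zi z_aut e1 by (simp add: m_assoc)
  also have "\<dots> = \<iota> (\<theta> b) \<otimes> zz i"
    using True zi e2 by (simp add: zz_def r_minus_distr m_assoc)
  finally show ?thesis .
next
  case False
  then show ?thesis by (simp add: zz_def)
qed

lemma autom_zz: "autom zz k"
  unfolding autom_def using comm_zz_zz zz_aut by (auto simp: commS_def)

lemma Dz_subring: "subring Dz S"
  unfolding Dz_def by (rule Dg_subring[OF autom_zz])

lemma Dz_carr: "Dz \<subseteq> carrier S"
  using Dz_subring subringE(1) by blast

lemma Dz_\<iota>: "\<iota> b \<in> Dz" unfolding Dz_def by (rule Dg_\<iota>)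

lemma Dz_zz: "zz i \<in> Dz"
proof (cases "i < k")
  case True then show ?thesis unfolding Dz_def by (rule Dg_z)
next
  case False then show ?thesis using subringE(2)[OF Dz_subring] by (simp add: zz_def)
qed

lemma Dz_mult: "a \<in> Dz \<Longrightarrow> b \<in> Dz \<Longrightarrow> a \<otimes> b \<in> Dz"
  using subringE(6)[OF Dz_subring] by blast

lemma ww_pow_\<iota>: "ww [^] (j::nat) \<otimes> \<iota> b = \<iota> ((\<theta> ^^ j) b) \<otimes> ww [^] j"
proof (induction j arbitrary: b)
  case 0 then show ?case by simp
next
  case (Suc j)
  have e1: "ww \<otimes> \<iota> b = \<iota> (\<theta> b) \<otimes> ww" using z_aut[of k b] by (simp add: ww_def)
  have "ww [^] Suc j \<otimes> \<iota> b = ww [^] j \<otimes> (ww \<otimes> \<iota> b)" by (simp add: m_assoc)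
  also have "\<dots> = (ww [^] j \<otimes> \<iota> (\<theta> b)) \<otimes> ww" by (simp add: e1 m_assoc)
  also have "\<dots> = \<iota> ((\<theta> ^^ j) (\<theta> b)) \<otimes> ww [^] Suc j" by (simp add: Suc m_assoc)
  finally show ?case by (simp add: funpow_swap1)
qed

lemma comm_pow_lp: "commS (ww [^] (j::nat)) (\<iota> (lp i))"
  using commS_pow[of "\<iota> (lp i)" ww j] comm_lp_ww commS_sym by simp

lemma comm_pow_zz: "commS (ww [^] (j::nat)) (zz i)"
  using commS_pow[of "zz i" ww j] comm_zz_ww commS_sym by simp

lemma pows_carr: "(\<lambda>j. ww [^] (j::nat)) ` {..<p} \<subseteq> carrier S" by auto

lemma VV_carr: "x \<in> VV p \<Longrightarrow> x \<in> carrier S"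
  unfolding VV_def using lspan_carrier[OF Dz_carr pows_carr] by blast

lemma VV_lmult: "a \<in> Dz \<Longrightarrow> x \<in> VV p \<Longrightarrow> a \<otimes> x \<in> VV p"
  unfolding VV_def by (rule lspan_lmult[OF Dz_subring pows_carr])

lemma VV_mono: "p \<le> q \<Longrightarrow> x \<in> VV p \<Longrightarrow> x \<in> VV q"
  unfolding VV_def by (rule lspan_mono) auto

lemma VV_add: "x \<in> VV p \<Longrightarrow> y \<in> VV p \<Longrightarrow> x \<oplus> y \<in> VV p"
  unfolding VV_def by (rule lspan.ladd)

lemma VV_zero: "\<zero> \<in> VV p"
  unfolding VV_def by (rule lspan.lzero)

lemma VV_neg: "x \<in> VV p \<Longrightarrow> \<ominus> x \<in> VV p"
  unfolding VV_def by (rule lspan_neg[OF Dz_subring pows_carr])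

lemma VV_gen: "a \<in> Dz \<Longrightarrow> j < p \<Longrightarrow> a \<otimes> ww [^] (j::nat) \<in> VV p"
  unfolding VV_def by (rule lspan.lgen) auto

lemma VV_rmult_gen:
  assumes c: "c \<in> carrier S" and h: "\<And>a j. a \<in> Dz \<Longrightarrow> j < p \<Longrightarrow> (a \<otimes> ww [^] (j::nat)) \<otimes> c \<in> VV q"
  shows "x \<in> VV p \<Longrightarrow> x \<otimes> c \<in> VV q"
  unfolding VV_def
  by (rule lspan_rmult[OF Dz_carr pows_carr c]) (use h in \<open>auto simp: VV_def\<close>)

lemma VV_rmult_comm: "c \<in> Dz \<Longrightarrow> commS c ww \<Longrightarrow> x \<in> VV p \<Longrightarrow> x \<otimes> c \<in> VV p"
proof (rule VV_rmult_gen)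
  fix a j assume c: "c \<in> Dz" "commS c ww" and a: "a \<in> Dz" "j < p"
  have cc: "c \<in> carrier S" "a \<in> carrier S" using c a Dz_carr by auto
  have "commS (ww [^] j) c" using commS_pow[OF cc(1) _ c(2)] commS_sym by simp
  then have "(a \<otimes> ww [^] j) \<otimes> c = (a \<otimes> c) \<otimes> ww [^] j"
    using cc by (simp add: commS_def m_assoc)
  then show "(a \<otimes> ww [^] j) \<otimes> c \<in> VV p" using VV_gen[OF Dz_mult[OF a(1) c(1)] a(2)] by simp
qed (use Dz_carr in auto)

lemma VV_rmult_\<iota>: "x \<in> VV p \<Longrightarrow> x \<otimes> \<iota> b \<in> VV p"
proof (rule VV_rmult_gen)
  fix a j assume a: "a \<in> Dz" "j < p"
  have cc: "a \<in> carrier S" using a Dz_carr by auto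
  have "(a \<otimes> ww [^] j) \<otimes> \<iota> b = (a \<otimes> \<iota> ((\<theta> ^^ j) b)) \<otimes> ww [^] j"
    using cc by (simp add: m_assoc ww_pow_\<iota>)
  then show "(a \<otimes> ww [^] j) \<otimes> \<iota> b \<in> VV p" using VV_gen[OF Dz_mult[OF a(1) Dz_\<iota>] a(2)] by simp
qed simp

lemma VV_rmult_ww: "x \<in> VV p \<Longrightarrow> x \<otimes> ww \<in> VV (Suc p)"
proof (rule VV_rmult_gen)
  fix a j assume a: "a \<in> Dz" "j < p"
  have cc: "a \<in> carrier S" using a Dz_carr by auto
  have "(a \<otimes> ww [^] j) \<otimes> ww = a \<otimes> ww [^] (Suc j)"
    using cc by (simp add: m_assoc)
  then show "(a \<otimes> ww [^] j) \<otimes> ww \<in> VV (Suc p)" using VV_gen[OF a(1), of "Suc j"] a(2) by simp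
qed simp

end

context nnstep begin

lemma E1:
  assumes i: "i < Suc k" and X: "X \<in> carrier S" and h: "X \<ominus> \<iota> a \<otimes> ww [^] (p::nat) \<in> VV p"
  shows "X \<otimes> z i \<ominus> \<iota> (a * lp i) \<otimes> ww [^] Suc p \<in> VV (Suc p)"
proof -
  define v where "v = X \<ominus> \<iota> a \<otimes> ww [^] p"
  define A where "A = \<iota> a"
  define P where "P = ww [^] p"
  define Z where "Z = zz i"
  define L where "L = \<iota> (lp i)"
  have c: "A \<in> carrier S" "P \<in> carrier S" "Z \<in> carrier S" "L \<in> carrier S" "v \<in> carrier S"
    using X by (auto simp: A_def P_def Z_def L_def v_def)
  have Xe: "X = A \<otimes> P \<oplus> v" using X c unfolding v_def A_def P_def by algebra
  have ze: "z i = Z \<oplus> L \<otimes> ww" unfolding Z_def L_def by (rule z_decomp[OF i])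
  have key1: "A \<otimes> P \<otimes> (L \<otimes> ww) = \<iota> (a * lp i) \<otimes> ww [^] Suc p"
  proof -
    have "P \<otimes> L = L \<otimes> P" using comm_pow_lp[of p i] by (simp add: commS_def P_def L_def)
    then have e: "P \<otimes> (L \<otimes> ww) = L \<otimes> (P \<otimes> ww)" using c by (metis m_assoc ww_carr)
    have "A \<otimes> P \<otimes> (L \<otimes> ww) = A \<otimes> (P \<otimes> (L \<otimes> ww))" using c by (simp add: m_assoc)
    also have "\<dots> = (A \<otimes> L) \<otimes> (P \<otimes> ww)" using c e by (simp add: m_assoc)
    finally show ?thesis by (simp add: A_def L_def P_def \<iota>_mult)
  qed
  have key2: "P \<otimes> Z = Z \<otimes> P" using comm_pow_zz[of p i] by (simp add: commS_def P_def Z_def)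
  have "(A \<otimes> P \<oplus> v) \<otimes> (Z \<oplus> L \<otimes> ww) \<ominus> A \<otimes> P \<otimes> (L \<otimes> ww)
      = A \<otimes> (P \<otimes> Z) \<oplus> v \<otimes> Z \<oplus> (v \<otimes> L) \<otimes> ww" using c ww_carr by algebra
  then have eq: "X \<otimes> z i \<ominus> \<iota> (a * lp i) \<otimes> ww [^] Suc p = (A \<otimes> Z) \<otimes> P \<oplus> v \<otimes> Z \<oplus> (v \<otimes> L) \<otimes> ww"
    using c key1 key2 Xe ze by (simp add: m_assoc)
  have vV: "v \<in> VV p" using h by (simp add: v_def)
  have t1: "(A \<otimes> Z) \<otimes> P \<in> VV (Suc p)" unfolding P_def
    by (rule VV_gen) (auto simp: A_def Z_def intro: Dz_mult Dz_\<iota> Dz_zz)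
  have t2: "v \<otimes> Z \<in> VV (Suc p)"
    using VV_rmult_comm[OF Dz_zz comm_zz_ww vV] VV_mono[of p "Suc p"] by (simp add: Z_def)
  have t3: "(v \<otimes> L) \<otimes> ww \<in> VV (Suc p)"
    using VV_rmult_ww[OF VV_rmult_\<iota>[OF vV]] by (simp add: L_def)
  show ?thesis unfolding eq using t1 t2 t3 by (intro VV_add)
qed

lemma E2:
  assumes i: "i < Suc k" and Y: "Y \<in> carrier S" and h: "Y \<ominus> \<iota> a \<otimes> ww [^] (p::nat) \<in> VV p"
  shows "Y \<otimes> z i [^] (j::nat) \<ominus> \<iota> (a * lp i ^ j) \<otimes> ww [^] (p + j) \<in> VV (p + j)"
proof (induction j)
  case 0 then show ?case using Y h by simp
next
  case (Suc j)
  have zc: "z i \<in> carrier S" using z_carr i by simp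
  have "Y \<otimes> z i [^] j \<otimes> z i \<ominus> \<iota> (a * lp i ^ j * lp i) \<otimes> ww [^] Suc (p + j) \<in> VV (Suc (p + j))"
    by (rule E1[OF i _ Suc]) (use Y zc in simp)
  then show ?case using Y zc by (simp add: m_assoc power_Suc2 mult.assoc del: power_Suc)
qed

lemma E3:
  "m \<le> Suc k \<Longrightarrow> smonom S z m \<alpha> \<ominus> \<iota> (dmon lp m \<alpha>) \<otimes> ww [^] (\<Sum>i<m. \<alpha> i) \<in> VV (\<Sum>i<m. \<alpha> i)"
proof (induction m)
  case 0 then show ?case by (simp add: \<iota>_one VV_zero minus_eq r_neg)
next
  case (Suc m)
  have sc: "smonom S z m \<alpha> \<in> carrier S" by (rule smonom_carrier) (use Suc.prems z_carr in auto)
  have "smonom S z m \<alpha> \<otimes> z m [^] \<alpha> m \<ominus> \<iota> (dmon lp m \<alpha> * lp m ^ \<alpha> m) \<otimes> ww [^] ((\<Sum>i<m. \<alpha> i) + \<alpha> m)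
     \<in> VV ((\<Sum>i<m. \<alpha> i) + \<alpha> m)"
    by (rule E2) (use Suc sc in auto)
  then show ?case by simp
qed

lemma reduction:
  assumes wN: "ww [^] (N::nat) \<in> VV N"
  shows "Dg z (Suc k) \<subseteq> VV N"
proof -
  have rw: "x \<otimes> ww \<in> VV N" if x: "x \<in> VV N" for x
  proof (rule VV_rmult_gen[OF ww_carr _ x])
    fix a j assume a: "a \<in> Dz" "j < N"
    have ac: "a \<in> carrier S" using a Dz_carr by auto
    have e: "(a \<otimes> ww [^] j) \<otimes> ww = a \<otimes> ww [^] Suc j" using ac by (simp add: m_assoc)
    show "(a \<otimes> ww [^] j) \<otimes> ww \<in> VV N"
    proof (cases "Suc j < N")
      case True then show ?thesis unfolding e by (rule VV_gen[OF a(1)])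
    next
      case False
      then have "Suc j = N" using a by simp
      then show ?thesis unfolding e using VV_lmult[OF a(1) wN] by simp
    qed
  qed
  have rz: "x \<otimes> z i \<in> VV N" if x: "x \<in> VV N" and i: "i < Suc k" for x i
  proof -
    have xc: "x \<in> carrier S" using VV_carr x by blast
    have "x \<otimes> z i = x \<otimes> zz i \<oplus> (x \<otimes> \<iota> (lp i)) \<otimes> ww"
      using z_decomp[OF i] xc by (simp add: r_distr m_assoc)
    moreover have "x \<otimes> zz i \<in> VV N" by (rule VV_rmult_comm[OF Dz_zz comm_zz_ww x])
    moreover have "(x \<otimes> \<iota> (lp i)) \<otimes> ww \<in> VV N" by (rule rw[OF VV_rmult_\<iota>[OF x]])
    ultimately show ?thesis by (simp add: VV_add)
  qed
  have one: "\<one> \<in> VV N"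
  proof (cases "N = 0")
    case True then show ?thesis using wN by simp
  next
    case False
    have "\<one> \<otimes> ww [^] (0::nat) \<in> VV N" by (rule VV_gen[OF subringE(3)[OF Dz_subring]]) (use False in simp)
    then show ?thesis by simp
  qed
  show ?thesis unfolding Dg_def
  proof (rule generate_ring_rmult_closed)
    show "range \<iota> \<union> z ` {..<Suc k} \<subseteq> carrier S" using z_carr by auto
    show "VV N \<subseteq> carrier S" using VV_carr by blast
  next
    fix x g assume x: "x \<in> VV N" and g: "g \<in> range \<iota> \<union> z ` {..<Suc k}"
    then show "x \<otimes> g \<in> VV N" using VV_rmult_\<iota> rz by auto
  qed (use one VV_add VV_neg in auto)
qed

end

context nnsetup begin

lemma NN_step:
  assumes aut: "autom z (Suc k)" and ni: "\<not> indep z (Suc k)"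
  shows "\<exists>z' N. autom z' k \<and> Dg z (Suc k) \<subseteq> lspan S (Dg z' k) ((\<lambda>j. z k [^] (j::nat)) ` {..<N})"
proof -
  obtain c :: "(nat \<Rightarrow> nat) \<Rightarrow> 'a" where cfin: "finite {\<alpha>. c \<alpha> \<noteq> 0}"
    and csupp: "\<forall>\<alpha>. c \<alpha> \<noteq> 0 \<longrightarrow> \<alpha> \<in> expvecs (Suc k)"
    and csum: "finsum S (\<lambda>\<alpha>. \<iota> (c \<alpha>) \<otimes> smonom S z (Suc k) \<alpha>) {\<alpha>. c \<alpha> \<noteq> 0} = \<zero>"
    and cnz: "\<exists>\<alpha>. c \<alpha> \<noteq> 0"
    using ni unfolding indep_def by blast
  define A where "A = {\<alpha>. c \<alpha> \<noteq> 0}"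
  define deg where "deg = (\<lambda>\<alpha>::nat\<Rightarrow>nat. \<Sum>i<Suc k. \<alpha> i)"
  define N where "N = Max (deg ` A)"
  define AN where "AN = {\<alpha> \<in> A. deg \<alpha> = N}"
  have Afin: "finite A" using cfin by (simp add: A_def)
  have Ane: "A \<noteq> {}" using cnz by (auto simp: A_def)
  have "N \<in> deg ` A" unfolding N_def using Afin Ane by (intro Max_in) auto
  then have ANne: "AN \<noteq> {}" by (auto simp: AN_def)
  have degle: "\<alpha> \<in> A \<Longrightarrow> deg \<alpha> \<le> N" for \<alpha> unfolding N_def using Afin by auto
  have ANinj: "inj_on (trunc k) AN"
  proof (rule inj_onI)
    fix \<alpha> \<beta> assume a: "\<alpha> \<in> AN" and b: "\<beta> \<in> AN" and t: "trunc k \<alpha> = trunc k \<beta>"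
    have lt: "\<forall>i<k. \<alpha> i = \<beta> i" using t by (auto simp: trunc_def fun_eq_iff) metis
    then have s: "(\<Sum>i<k. \<alpha> i) = (\<Sum>i<k. \<beta> i)" by simp
    have "deg \<alpha> = deg \<beta>" using a b by (simp add: AN_def)
    then have kk: "\<alpha> k = \<beta> k" using s by (simp add: deg_def)
    have ea: "\<alpha> \<in> expvecs (Suc k)" "\<beta> \<in> expvecs (Suc k)" using a b csupp by (auto simp: AN_def A_def)
    show "\<alpha> = \<beta>"
    proof
      fix i show "\<alpha> i = \<beta> i"
      proof (cases "i < k")
        case True then show ?thesis using lt by simp
      next
        case False
        show ?thesis
        proof (cases "i = k")
          case True then show ?thesis using kk by simp
        next
          case False
          then have "i \<ge> Suc k" using \<open>\<not> i < k\<close> by simp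
          then show ?thesis using ea by (simp add: expvecs_def)
        qed
      qed
    qed
  qed
  have ANfin: "finite AN" using Afin by (simp add: AN_def)
  have ANc: "\<forall>\<alpha>\<in>AN. c \<alpha> \<noteq> 0" by (simp add: AN_def A_def)
  obtain l where lF: "\<forall>i<k. l i \<in> F" and u: "(\<Sum>\<alpha>\<in>AN. c \<alpha> * dmon l k \<alpha>) \<noteq> 0"
    using mv_nonroot[OF F_inf F_cen ANfin ANne ANc ANinj] by blast
  define u where "u = (\<Sum>\<alpha>\<in>AN. c \<alpha> * dmon l k \<alpha>)"
  interpret st: nnstep S \<iota> \<theta> F z k l
    by (unfold_locales) (use aut lF in auto)
  define t where "t = (\<lambda>\<alpha>. \<iota> (c \<alpha>) \<otimes> smonom S z (Suc k) \<alpha>)"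
  define s where "s = (\<lambda>\<alpha>. if deg \<alpha> = N then c \<alpha> * dmon l k \<alpha> else 0)"
  have zc: "\<forall>i<Suc k. z i \<in> carrier S" using st.z_carr by blast
  have tc: "t \<alpha> \<in> carrier S" for \<alpha> unfolding t_def using smonom_carrier[OF zc] by simp
  have E4: "t \<alpha> \<ominus> \<iota> (s \<alpha>) \<otimes> st.ww [^] N \<in> st.VV N" if a: "\<alpha> \<in> A" for \<alpha>
  proof -
    define M where "M = smonom S z (Suc k) \<alpha>"
    define dm where "dm = dmon l k \<alpha>"
    define d where "d = deg \<alpha>"
    have Mc: "M \<in> carrier S" unfolding M_def using smonom_carrier[OF zc] .
    have dmeq: "dmon st.lp (Suc k) \<alpha> = dm"
    proof -
      have "dmon st.lp k \<alpha> = dmon l k \<alpha>" by (rule dmon_cong) (simp add: st.lp_def)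
      then show ?thesis by (simp add: dm_def st.lp_def)
    qed
    have "M \<ominus> \<iota> dm \<otimes> st.ww [^] d \<in> st.VV d"
      using st.E3[of "Suc k" \<alpha>] dmeq by (simp add: M_def d_def deg_def)
    then have "M \<ominus> \<iota> dm \<otimes> st.ww [^] d \<in> st.VV N"
      using st.VV_mono degle[OF a] by (auto simp: d_def)
    then have h: "\<iota> (c \<alpha>) \<otimes> (M \<ominus> \<iota> dm \<otimes> st.ww [^] d) \<in> st.VV N"
      by (rule st.VV_lmult[OF st.Dz_\<iota>])
    have e: "\<iota> (c \<alpha>) \<otimes> (M \<ominus> \<iota> dm \<otimes> st.ww [^] d) = t \<alpha> \<ominus> \<iota> (c \<alpha> * dm) \<otimes> st.ww [^] d"
      using Mc by (simp add: r_minus_distr t_def M_def m_assoc \<iota>_mult)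
    show ?thesis
    proof (cases "d = N")
      case True
      then show ?thesis using h e by (simp add: s_def d_def dm_def)
    next
      case False
      then have dN: "d < N" using degle[OF a] by (simp add: d_def)
      have g: "\<iota> (c \<alpha> * dm) \<otimes> st.ww [^] d \<in> st.VV N" by (rule st.VV_gen[OF st.Dz_\<iota> dN])
      have "t \<alpha> = (t \<alpha> \<ominus> \<iota> (c \<alpha> * dm) \<otimes> st.ww [^] d) \<oplus> \<iota> (c \<alpha> * dm) \<otimes> st.ww [^] d"
        using tc[of \<alpha>] st.ww_carr \<iota>_carr[of "c \<alpha> * dm"] nat_pow_closed[OF st.ww_carr, of d] by algebra
      then have "t \<alpha> \<in> st.VV N" using h e g st.VV_add by metis
      then show ?thesis using False tc[of \<alpha>] by (simp add: s_def d_def minus_eq)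
    qed
  qed
  have E5: "finite B \<Longrightarrow> B \<subseteq> A \<Longrightarrow> finsum S t B \<ominus> \<iota> (\<Sum>\<alpha>\<in>B. s \<alpha>) \<otimes> st.ww [^] N \<in> st.VV N" for B
  proof (induction B rule: finite_induct)
    case empty then show ?case by (simp add: st.VV_zero minus_eq)
  next
    case (insert x B)
    have tB: "t \<in> B \<rightarrow> carrier S" using tc by auto
    have eq: "finsum S t (insert x B) = t x \<oplus> finsum S t B"
      by (rule finsum_insert) (use insert tB tc in auto)
    have fc: "finsum S t B \<in> carrier S" using finsum_closed tB by blast
    have e2: "\<iota> (\<Sum>\<alpha>\<in>insert x B. s \<alpha>) = \<iota> (s x) \<oplus> \<iota> (\<Sum>\<alpha>\<in>B. s \<alpha>)"
      using insert(1,2) by (simp add: \<iota>_add)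
    have "finsum S t (insert x B) \<ominus> \<iota> (\<Sum>\<alpha>\<in>insert x B. s \<alpha>) \<otimes> st.ww [^] N
        = (t x \<ominus> \<iota> (s x) \<otimes> st.ww [^] N) \<oplus> (finsum S t B \<ominus> \<iota> (\<Sum>\<alpha>\<in>B. s \<alpha>) \<otimes> st.ww [^] N)"
      unfolding eq e2 using fc tc[of x] st.ww_carr nat_pow_closed[OF st.ww_carr, of N] \<iota>_carr[of "s x"] \<iota>_carr[of "\<Sum>\<alpha>\<in>B. s \<alpha>"]
      by algebra
    then show ?case using E4 insert by (simp add: st.VV_add)
  qed
  have sA: "(\<Sum>\<alpha>\<in>A. s \<alpha>) = u"
    unfolding u_def AN_def s_def using sum.inter_filter[OF Afin, of "\<lambda>\<alpha>. c \<alpha> * dmon l k \<alpha>" "\<lambda>\<alpha>. deg \<alpha> = N"]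
    by simp
  have "finsum S t A \<ominus> \<iota> u \<otimes> st.ww [^] N \<in> st.VV N" using E5[OF Afin] sA by simp
  moreover have "finsum S t A = \<zero>" using csum by (simp add: t_def A_def)
  ultimately have "\<ominus> (\<iota> u \<otimes> st.ww [^] N) \<in> st.VV N" by (simp add: minus_eq)
  then have "\<ominus> (\<ominus> (\<iota> u \<otimes> st.ww [^] N)) \<in> st.VV N" by (rule st.VV_neg)
  then have "\<iota> u \<otimes> st.ww [^] N \<in> st.VV N" by simp
  then have "\<iota> (inverse u) \<otimes> (\<iota> u \<otimes> st.ww [^] N) \<in> st.VV N" by (rule st.VV_lmult[OF st.Dz_\<iota>])
  moreover have "\<iota> (inverse u) \<otimes> (\<iota> u \<otimes> st.ww [^] N) = st.ww [^] N"
    using u by (simp add: u_def flip: m_assoc \<iota>_mult) (simp add: \<iota>_one)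
  ultimately have "st.ww [^] N \<in> st.VV N" by simp
  then have "Dg z (Suc k) \<subseteq> st.VV N" by (rule st.reduction)
  then show ?thesis using st.autom_zz unfolding st.VV_def st.Dz_def st.ww_def by blast
qed

lemma NN: "autom z k \<Longrightarrow> \<exists>m y H. autom y m \<and> indep y m \<and> finite H \<and> H \<subseteq> carrier S \<and> Dg z k \<subseteq> lspan S (Dg y m) H"
proof (induction k arbitrary: z)
  have triv: "\<exists>m y H. autom y m \<and> indep y m \<and> finite H \<and> H \<subseteq> carrier S \<and> Dg z k \<subseteq> lspan S (Dg y m) H"
    if "autom z k" "indep z k" for z k
  proof (intro exI conjI)
    show "Dg z k \<subseteq> lspan S (Dg z k) {\<one>}"
    proof
      fix x assume x: "x \<in> Dg z k"
      then have "x \<otimes> \<one> \<in> lspan S (Dg z k) {\<one>}" by (intro lspan.lgen) auto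
      then show "x \<in> lspan S (Dg z k) {\<one>}" using x Dg_carrier[OF that(1)] by auto
    qed
  qed (use that in auto)
  { case 0 then show ?case using triv indep0 by blast }
  { case (Suc k)
    show ?case
    proof (cases "indep z (Suc k)")
      case True then show ?thesis using triv Suc.prems by blast
    next
      case False
      obtain z' N where z': "autom z' k"
        and sub: "Dg z (Suc k) \<subseteq> lspan S (Dg z' k) ((\<lambda>j. z k [^] (j::nat)) ` {..<N})"
        using NN_step[OF Suc.prems False] by blast
      obtain m y H where y: "autom y m" "indep y m" "finite H" "H \<subseteq> carrier S"
        and sub2: "Dg z' k \<subseteq> lspan S (Dg y m) H" using Suc.IH[OF z'] by blast
      have zkc: "z k \<in> carrier S" using Suc.prems by (simp add: autom_def)
      have pc: "(\<lambda>j. z k [^] (j::nat)) ` {..<N} \<subseteq> carrier S" using zkc by auto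
      define H2 where "H2 = {h \<otimes> x |h x. h \<in> H \<and> x \<in> (\<lambda>j. z k [^] (j::nat)) ` {..<N}}"
      have "Dg z (Suc k) \<subseteq> lspan S (Dg y m) H2"
        using sub lspan_trans[OF Dg_subring[OF y(1)] y(4) pc sub2] unfolding H2_def by blast
      moreover have "finite H2" unfolding H2_def by (rule finite_image_set2) (use y(3) in auto)
      moreover have "H2 \<subseteq> carrier S" unfolding H2_def using y(4) pc by auto
      ultimately show ?thesis using y by blast
    qed }
qed

end

definition mnm :: "'a::zero \<Rightarrow> (nat \<Rightarrow> nat) \<Rightarrow> ((nat \<Rightarrow> nat) \<Rightarrow> 'a)" where
  "mnm c \<alpha> = (\<lambda>\<gamma>. if \<gamma> = \<alpha> then c else 0)"

lemma ring_aut_zero: "ring_aut f \<Longrightarrow> f 0 = 0"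
  unfolding ring_aut_def by (metis add_cancel_right_right)

lemma funpow_fix: "f c = c \<Longrightarrow> (f ^^ e) c = c"
  by (induction e) auto

lemma spow_cong: "(\<forall>j<m. \<alpha> j = \<beta> j) \<Longrightarrow> spow \<sigma> m \<alpha> = spow \<sigma> m \<beta>"
  by (induction m) auto

lemma spow_zero_vec: "spow \<sigma> m (\<lambda>_. 0) = id"
  by (induction m) auto

lemma spow_fix: "(\<forall>i<m. \<sigma> i c = c) \<Longrightarrow> spow \<sigma> m \<alpha> c = c"
  by (induction m) (auto simp: funpow_fix)

lemma spow_one: "(\<forall>i<m. ring_aut (\<sigma> i)) \<Longrightarrow> spow \<sigma> m \<alpha> 1 = 1"
  by (rule spow_fix) (auto simp: ring_aut_def)

lemma spow_0: "(\<forall>i<m. ring_aut (\<sigma> i)) \<Longrightarrow> spow \<sigma> m \<alpha> 0 = 0"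
  by (rule spow_fix) (auto simp: ring_aut_zero)

lemma spow_single: "i < m \<Longrightarrow> spow \<sigma> m (\<lambda>j. if j = i then e else 0) = \<sigma> i ^^ e"
proof (induction m)
  case 0 then show ?case by simp
next
  case (Suc m)
  show ?case
  proof (cases "i = m")
    case True
    have "spow \<sigma> m (\<lambda>j. if j = i then e else 0) = spow \<sigma> m (\<lambda>_. 0)"
      by (rule spow_cong) (use True in auto)
    then show ?thesis using True by (simp add: spow_zero_vec)
  next
    case False
    then have "i < m" using Suc.prems by simp
    then show ?thesis using Suc.IH False by simp
  qed
qed

lemma mnm_carrier: "\<alpha> \<in> expvecs n \<Longrightarrow> mnm c \<alpha> \<in> carrier (skew_poly_ring \<sigma> n)"
  unfolding skew_poly_ring_def mnm_def
  by (auto intro: finite_subset[of _ "{\<alpha>}"])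

lemma mnm_mult:
  assumes aut: "\<forall>i<n. ring_aut (\<sigma> i)"
  shows "mnm a \<alpha> \<otimes>\<^bsub>skew_poly_ring \<sigma> n\<^esub> mnm b \<beta> = mnm (a * spow \<sigma> n \<alpha> b) (\<lambda>i. \<alpha> i + \<beta> i)"
proof
  fix \<gamma>
  have lhs: "(mnm a \<alpha> \<otimes>\<^bsub>skew_poly_ring \<sigma> n\<^esub> mnm b \<beta>) \<gamma> =
     (\<Sum>\<alpha>'\<in>{\<alpha>'. mnm a \<alpha> \<alpha>' \<noteq> 0 \<and> (\<forall>i. \<alpha>' i \<le> \<gamma> i)}. mnm a \<alpha> \<alpha>' * spow \<sigma> n \<alpha>' (mnm b \<beta> (\<lambda>i. \<gamma> i - \<alpha>' i)))"
    by (simp add: skew_poly_ring_def skew_mult_def)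
  show "(mnm a \<alpha> \<otimes>\<^bsub>skew_poly_ring \<sigma> n\<^esub> mnm b \<beta>) \<gamma> = mnm (a * spow \<sigma> n \<alpha> b) (\<lambda>i. \<alpha> i + \<beta> i) \<gamma>"
  proof (cases "a \<noteq> 0 \<and> (\<forall>i. \<alpha> i \<le> \<gamma> i)")
    case True
    then have set: "{\<alpha>'. mnm a \<alpha> \<alpha>' \<noteq> 0 \<and> (\<forall>i. \<alpha>' i \<le> \<gamma> i)} = {\<alpha>}"
      by (auto simp: mnm_def)
    have iff: "((\<lambda>i. \<gamma> i - \<alpha> i) = \<beta>) \<longleftrightarrow> (\<gamma> = (\<lambda>i. \<alpha> i + \<beta> i))"
      using True by (auto simp: fun_eq_iff) (metis add_diff_inverse_nat add_diff_cancel_left' not_le)+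
    show ?thesis unfolding lhs set using iff spow_0[OF aut] by (simp add: mnm_def)
  next
    case False
    then have set: "{\<alpha>'. mnm a \<alpha> \<alpha>' \<noteq> 0 \<and> (\<forall>i. \<alpha>' i \<le> \<gamma> i)} = {}"
      by (auto simp: mnm_def)
    have "a = 0 \<or> \<gamma> \<noteq> (\<lambda>i. \<alpha> i + \<beta> i)" using False by auto
    then show ?thesis unfolding lhs set by (auto simp: mnm_def)
  qed
qed

lemma one_mnm: "\<one>\<^bsub>skew_poly_ring \<sigma> n\<^esub> = mnm 1 (\<lambda>_. 0)"
  by (simp add: skew_poly_ring_def mnm_def fun_eq_iff)

lemma const_mnm: "const_poly c = mnm c (\<lambda>_. 0)"
  by (simp add: const_poly_def mnm_def fun_eq_iff)

lemma finsum_skew: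
  assumes R: "ring (skew_poly_ring \<sigma> n)"
  shows "finite A \<Longrightarrow> f \<in> A \<rightarrow> carrier (skew_poly_ring \<sigma> n) \<Longrightarrow>
    finsum (skew_poly_ring \<sigma> n) f A = (\<lambda>\<gamma>. \<Sum>\<alpha>\<in>A. f \<alpha> \<gamma>)"
proof (induction A rule: finite_induct)
  interpret ring "skew_poly_ring \<sigma> n" by (rule R)
  case empty
  show ?case by (simp only: finsum_empty) (simp add: skew_poly_ring_def fun_eq_iff)
next
  case (insert x A)
  interpret ring "skew_poly_ring \<sigma> n" by (rule R)
  have "finsum (skew_poly_ring \<sigma> n) f (insert x A) = f x \<oplus>\<^bsub>skew_poly_ring \<sigma> n\<^esub> finsum (skew_poly_ring \<sigma> n) f A"
    by (rule finsum_insert) (use insert in auto)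
  then show ?case using insert by (simp add: skew_poly_ring_def fun_eq_iff)
qed

lemma poly_decomp:
  assumes R: "ring (skew_poly_ring \<sigma> n)" and p: "p \<in> carrier (skew_poly_ring \<sigma> n)"
  shows "p = finsum (skew_poly_ring \<sigma> n) (\<lambda>\<alpha>. mnm (p \<alpha>) \<alpha>) {\<alpha>. p \<alpha> \<noteq> 0}"
proof -
  have fin: "finite {\<alpha>. p \<alpha> \<noteq> 0}" and ev: "\<forall>\<alpha>. p \<alpha> \<noteq> 0 \<longrightarrow> \<alpha> \<in> expvecs n"
    using p by (auto simp: skew_poly_ring_def)
  have "finsum (skew_poly_ring \<sigma> n) (\<lambda>\<alpha>. mnm (p \<alpha>) \<alpha>) {\<alpha>. p \<alpha> \<noteq> 0} = (\<lambda>\<gamma>. \<Sum>\<alpha>\<in>{\<alpha>. p \<alpha> \<noteq> 0}. mnm (p \<alpha>) \<alpha> \<gamma>)"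
    by (rule finsum_skew[OF R fin]) (use ev mnm_carrier in blast)
  also have "\<dots> = p"
  proof
    fix \<gamma>
    show "(\<Sum>\<alpha>\<in>{\<alpha>. p \<alpha> \<noteq> 0}. mnm (p \<alpha>) \<alpha> \<gamma>) = p \<gamma>"
      unfolding mnm_def using fin by (simp add: sum.delta)
  qed
  finally show ?thesis by simp
qed

lemma ring_aut_funpow: "ring_aut f \<Longrightarrow> ring_aut (f ^^ e)"
proof -
  assume f: "ring_aut f"
  have b: "bij (f ^^ e)" using bij_betw_funpow[of f UNIV e] f by (simp add: ring_aut_def)
  have "(\<forall>x y. (f ^^ e) (x + y) = (f ^^ e) x + (f ^^ e) y) \<and> (\<forall>x y. (f ^^ e) (x * y) = (f ^^ e) x * (f ^^ e) y) \<and> (f ^^ e) 1 = 1"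
    by (induction e) (use f in \<open>auto simp: ring_aut_def\<close>)
  then show ?thesis using b by (simp add: ring_aut_def)
qed

definition uvec :: "nat \<Rightarrow> nat \<Rightarrow> (nat \<Rightarrow> nat)" where
  "uvec i e = (\<lambda>j. if j = i then e else 0)"

lemma uvec_ev: "i < n \<Longrightarrow> uvec i e \<in> expvecs n"
  by (simp add: uvec_def expvecs_def)

lemma zero_ev: "(\<lambda>_. 0) \<in> expvecs n"
  by (simp add: expvecs_def)

locale qsetup =
  fixes \<sigma> :: "nat \<Rightarrow> 'a::division_ring \<Rightarrow> 'a" and n :: nat and I and d :: "nat \<Rightarrow> nat" and \<theta> :: "'a \<Rightarrow> 'a"
  assumes aut: "\<forall>i<n. ring_aut (\<sigma> i)"
    and I: "ideal I (skew_poly_ring \<sigma> n)" and Ip: "I \<noteq> carrier (skew_poly_ring \<sigma> n)"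
    and dpos: "\<forall>i<n. 0 < d i" and dth: "\<forall>i<n. \<sigma> i ^^ d i = \<theta>"
begin

abbreviation "R \<equiv> skew_poly_ring \<sigma> n"
abbreviation "Q \<equiv> R Quot I"

definition "\<pi> p = I +>\<^bsub>R\<^esub> p"
definition "\<iota> x = \<pi> (const_poly x)"
definition "z i = \<pi> (mnm 1 (uvec i (d i)))"

lemma Rring: "ring R" using I ideal.axioms(2) by blast
lemma Qring: "ring Q" using I ideal.quotient_is_ring by blast
lemma hom: "\<pi> \<in> ring_hom R Q"
  unfolding \<pi>_def[abs_def] using ideal.rcos_ring_hom[OF I] by simp

lemma \<pi>c: "p \<in> carrier R \<Longrightarrow> \<pi> p \<in> carrier Q" by (rule ring_hom_closed[OF hom])
lemma \<pi>add: "p \<in> carrier R \<Longrightarrow> q \<in> carrier R \<Longrightarrow> \<pi> (p \<oplus>\<^bsub>R\<^esub> q) = \<pi> p \<oplus>\<^bsub>Q\<^esub> \<pi> q"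
  by (rule ring_hom_add[OF hom])
lemma \<pi>mult: "p \<in> carrier R \<Longrightarrow> q \<in> carrier R \<Longrightarrow> \<pi> (p \<otimes>\<^bsub>R\<^esub> q) = \<pi> p \<otimes>\<^bsub>Q\<^esub> \<pi> q"
  by (rule ring_hom_mult[OF hom])
lemma \<pi>one: "\<pi> \<one>\<^bsub>R\<^esub> = \<one>\<^bsub>Q\<^esub>" by (rule ring_hom_one[OF hom])
lemma \<pi>zero: "\<pi> \<zero>\<^bsub>R\<^esub> = \<zero>\<^bsub>Q\<^esub>" by (rule ring_hom_zero[OF hom Rring Qring])

lemma mnm_mult': "mnm a \<alpha> \<otimes>\<^bsub>R\<^esub> mnm b \<beta> = mnm (a * spow \<sigma> n \<alpha> b) (\<lambda>i. \<alpha> i + \<beta> i)"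
  by (rule mnm_mult[OF aut])

lemma const_carr: "const_poly x \<in> carrier R"
  unfolding const_mnm by (rule mnm_carrier[OF zero_ev])

lemma \<iota>_carr: "\<iota> x \<in> carrier Q" unfolding \<iota>_def using \<pi>c const_carr by blast

lemma \<iota>_add: "\<iota> (x + y) = \<iota> x \<oplus>\<^bsub>Q\<^esub> \<iota> y"
proof -
  have "const_poly (x + y) = const_poly x \<oplus>\<^bsub>R\<^esub> const_poly y"
    by (simp add: skew_poly_ring_def const_poly_def fun_eq_iff)
  then show ?thesis unfolding \<iota>_def using \<pi>add const_carr by simp
qed

lemma \<iota>_mult: "\<iota> (x * y) = \<iota> x \<otimes>\<^bsub>Q\<^esub> \<iota> y"
proof -
  have "const_poly (x * y) = const_poly x \<otimes>\<^bsub>R\<^esub> const_poly y"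
    unfolding const_mnm mnm_mult' by (simp add: spow_zero_vec)
  then show ?thesis unfolding \<iota>_def using \<pi>mult const_carr by simp
qed

lemma \<iota>_one: "\<iota> 1 = \<one>\<^bsub>Q\<^esub>"
  using \<pi>one unfolding \<iota>_def const_mnm one_mnm[of \<sigma> n] .

lemma nontriv: "\<one>\<^bsub>Q\<^esub> \<noteq> \<zero>\<^bsub>Q\<^esub>"
proof
  assume h: "\<one>\<^bsub>Q\<^esub> = \<zero>\<^bsub>Q\<^esub>"
  have "\<one>\<^bsub>Q\<^esub> = I +>\<^bsub>R\<^esub> \<one>\<^bsub>R\<^esub>" "\<zero>\<^bsub>Q\<^esub> = I" by (simp_all add: FactRing_def)
  then have "I +>\<^bsub>R\<^esub> \<one>\<^bsub>R\<^esub> = I" using h by simp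
  moreover have "\<one>\<^bsub>R\<^esub> \<in> I +>\<^bsub>R\<^esub> \<one>\<^bsub>R\<^esub>"
  proof -
    interpret ideal I R by (rule I)
    show ?thesis by (rule a_rcos_self) simp
  qed
  ultimately have "\<one>\<^bsub>R\<^esub> \<in> I" by simp
  then show False using ideal.one_imp_carrier[OF I] Ip by blast
qed

end

context qsetup begin

lemma spow_uvec: "i < n \<Longrightarrow> spow \<sigma> n (uvec i (d i)) = \<theta>"
  using spow_single[of i n \<sigma> "d i"] dth by (simp add: uvec_def)

lemma z_carr: "i < n \<Longrightarrow> z i \<in> carrier Q"
  unfolding z_def by (rule \<pi>c[OF mnm_carrier[OF uvec_ev]])

lemma mnm1_mult: "mnm 1 \<alpha> \<otimes>\<^bsub>R\<^esub> mnm 1 \<beta> = mnm 1 (\<lambda>i. \<alpha> i + \<beta> i)"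
  by (simp add: mnm_mult' spow_one[OF aut])

lemma z_comm: "i < n \<Longrightarrow> j < n \<Longrightarrow> z i \<otimes>\<^bsub>Q\<^esub> z j = z j \<otimes>\<^bsub>Q\<^esub> z i"
proof -
  assume ij: "i < n" "j < n"
  have "z i \<otimes>\<^bsub>Q\<^esub> z j = \<pi> (mnm 1 (uvec i (d i)) \<otimes>\<^bsub>R\<^esub> mnm 1 (uvec j (d j)))"
    unfolding z_def using ij by (simp add: \<pi>mult mnm_carrier uvec_ev)
  also have "\<dots> = \<pi> (mnm 1 (uvec j (d j)) \<otimes>\<^bsub>R\<^esub> mnm 1 (uvec i (d i)))"
    unfolding mnm1_mult by (simp add: add.commute)
  also have "\<dots> = z j \<otimes>\<^bsub>Q\<^esub> z i"
    unfolding z_def using ij by (simp add: \<pi>mult mnm_carrier uvec_ev)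
  finally show ?thesis .
qed

lemma z_aut: "i < n \<Longrightarrow> z i \<otimes>\<^bsub>Q\<^esub> \<iota> b = \<iota> (\<theta> b) \<otimes>\<^bsub>Q\<^esub> z i"
proof -
  assume i: "i < n"
  have c: "mnm 1 (uvec i (d i)) \<in> carrier R" "\<And>x. mnm x (\<lambda>_. 0) \<in> carrier R"
    using i by (simp_all add: mnm_carrier uvec_ev zero_ev)
  have "z i \<otimes>\<^bsub>Q\<^esub> \<iota> b = \<pi> (mnm 1 (uvec i (d i)) \<otimes>\<^bsub>R\<^esub> mnm b (\<lambda>_. 0))"
    unfolding z_def \<iota>_def const_mnm using c by (simp add: \<pi>mult)
  also have "\<dots> = \<pi> (mnm (\<theta> b) (uvec i (d i)))"
    unfolding mnm_mult' using spow_uvec[OF i] by simp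
  also have "\<dots> = \<pi> (mnm (\<theta> b) (\<lambda>_. 0) \<otimes>\<^bsub>R\<^esub> mnm 1 (uvec i (d i)))"
    unfolding mnm_mult' by (simp add: spow_zero_vec)
  also have "\<dots> = \<iota> (\<theta> b) \<otimes>\<^bsub>Q\<^esub> z i"
    unfolding z_def \<iota>_def const_mnm using c by (simp add: \<pi>mult)
  finally show ?thesis .
qed

definition "Rset = {r \<in> expvecs n. \<forall>i<n. r i < d i}"
definition "G = (\<lambda>r. \<pi> (mnm 1 r)) ` Rset"

lemma Rset_fin: "finite Rset"
proof -
  have "Rset \<subseteq> (\<lambda>f i. if i < n then f i else 0) ` (PiE {..<n} (\<lambda>i. {..<d i}))"
  proof
    fix r assume r: "r \<in> Rset"
    have "r = (\<lambda>i. if i < n then restrict r {..<n} i else 0)"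
      using r by (auto simp: Rset_def expvecs_def fun_eq_iff)
    moreover have "restrict r {..<n} \<in> PiE {..<n} (\<lambda>i. {..<d i})" using r by (auto simp: Rset_def)
    ultimately show "r \<in> (\<lambda>f i. if i < n then f i else 0) ` (PiE {..<n} (\<lambda>i. {..<d i}))" by blast
  qed
  moreover have "finite (PiE {..<n} (\<lambda>i. {..<d i}))" by (rule finite_PiE) auto
  ultimately show ?thesis using finite_subset by blast
qed

lemma G_fin: "finite G" unfolding G_def using Rset_fin by simp

lemma G_carr: "G \<subseteq> carrier Q"
  unfolding G_def Rset_def using \<pi>c mnm_carrier by blast

lemma Q_carrier_\<pi>: "s \<in> carrier Q \<Longrightarrow> \<exists>p\<in>carrier R. s = \<pi> p"
  by (auto simp: FactRing_def A_RCOSETS_def' \<pi>_def)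

end

locale qsetup2 = qsetup +
  assumes th_aut: "ring_aut \<theta>"
    and Finf: "infinite {x::'a. (\<forall>y. x * y = y * x) \<and> (\<forall>i<n. \<sigma> i x = x)}"
    and th_fix: "\<forall>x\<in>{x::'a. (\<forall>y. x * y = y * x) \<and> (\<forall>i<n. \<sigma> i x = x)}. \<theta> x = x"

sublocale qsetup2 \<subseteq> nn: nnsetup Q \<iota> \<theta> "{x::'a. (\<forall>y. x * y = y * x) \<and> (\<forall>i<n. \<sigma> i x = x)}"
proof (intro nnsetup.intro Qring nnsetup_axioms.intro)
  show "\<theta> 1 = 1" using th_aut by (simp add: ring_aut_def)
qed (use \<iota>_carr \<iota>_add \<iota>_mult \<iota>_one nontriv Finf th_fix in auto)

context qsetup2 begin

lemma autom_z: "nn.autom z n"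
  unfolding nn.autom_def using z_carr z_comm z_aut by blast

lemma Dg_sub: "subring (nn.Dg z n) Q" by (rule nn.Dg_subring[OF autom_z])

lemma Dg_pow: "x \<in> nn.Dg z n \<Longrightarrow> x [^]\<^bsub>Q\<^esub> (j::nat) \<in> nn.Dg z n"
  by (induction j) (auto intro: subringE(3,6)[OF Dg_sub])

lemma pow_z: "i < n \<Longrightarrow> \<pi> (mnm 1 (uvec i (j * d i))) = z i [^]\<^bsub>Q\<^esub> j"
proof (induction j)
  case 0
  have "uvec i (0 * d i) = (\<lambda>_. 0)" by (simp add: uvec_def fun_eq_iff)
  then show ?case using \<pi>one by (simp add: one_mnm)
next
  case (Suc j)
  have e: "uvec i (Suc j * d i) = (\<lambda>k. uvec i (j * d i) k + uvec i (d i) k)"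
    by (simp add: uvec_def fun_eq_iff)
  have "\<pi> (mnm 1 (uvec i (Suc j * d i))) = \<pi> (mnm 1 (uvec i (j * d i)) \<otimes>\<^bsub>R\<^esub> mnm 1 (uvec i (d i)))"
    unfolding e mnm1_mult ..
  also have "\<dots> = \<pi> (mnm 1 (uvec i (j * d i))) \<otimes>\<^bsub>Q\<^esub> z i"
    unfolding z_def using Suc.prems by (simp add: \<pi>mult mnm_carrier uvec_ev)
  finally show ?case using Suc by simp
qed

lemma Dg_beta: "m \<le> n \<Longrightarrow> \<pi> (mnm 1 (\<lambda>i. if i < m then q i * d i else 0)) \<in> nn.Dg z n"
proof (induction m)
  case 0
  then show ?case using \<pi>one subringE(3)[OF Dg_sub] by (simp add: one_mnm)
next
  case (Suc m)
  have e: "(\<lambda>i. if i < Suc m then q i * d i else 0) = (\<lambda>i. (if i < m then q i * d i else 0) + uvec m (q m * d m) i)"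
    by (auto simp: uvec_def fun_eq_iff)
  have ev: "(\<lambda>i. if i < m then q i * d i else 0) \<in> expvecs n" using Suc.prems by (auto simp: expvecs_def)
  have "\<pi> (mnm 1 (\<lambda>i. if i < Suc m then q i * d i else 0))
      = \<pi> (mnm 1 (\<lambda>i. if i < m then q i * d i else 0)) \<otimes>\<^bsub>Q\<^esub> \<pi> (mnm 1 (uvec m (q m * d m)))"
    unfolding e mnm1_mult[symmetric] using Suc.prems ev by (simp add: \<pi>mult mnm_carrier uvec_ev)
  also have "\<pi> (mnm 1 (uvec m (q m * d m))) = z m [^]\<^bsub>Q\<^esub> q m" using pow_z Suc.prems by simp
  finally show ?case using Suc subringE(6)[OF Dg_sub] Dg_pow nn.Dg_z[of m n z] by simp
qed

lemma mono_in_span: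
  assumes a: "\<alpha> \<in> expvecs n"
  shows "\<pi> (mnm c \<alpha>) \<in> lspan Q (nn.Dg z n) G"
proof -
  define q where "q = (\<lambda>i. \<alpha> i div d i)"
  define r where "r = (\<lambda>i. \<alpha> i mod d i)"
  define qd where "qd = (\<lambda>i. if i < n then q i * d i else 0)"
  have a0: "\<And>i. i \<ge> n \<Longrightarrow> \<alpha> i = 0" using a by (simp add: expvecs_def)
  have ae: "\<alpha> = (\<lambda>i. qd i + r i)"
  proof
    fix i show "\<alpha> i = qd i + r i"
      by (cases "i < n") (simp_all add: qd_def q_def r_def a0)
  qed
  have rR: "r \<in> Rset" using dpos a0 by (auto simp: Rset_def r_def expvecs_def)
  have qdev: "qd \<in> expvecs n" by (simp add: qd_def expvecs_def)
  have rev: "r \<in> expvecs n" using rR by (simp add: Rset_def)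
  have e: "mnm c \<alpha> = (mnm c (\<lambda>_. 0) \<otimes>\<^bsub>R\<^esub> mnm 1 qd) \<otimes>\<^bsub>R\<^esub> mnm 1 r"
    unfolding mnm_mult' by (simp add: spow_zero_vec spow_one[OF aut] ae)
  have c1: "mnm c (\<lambda>_. 0) \<in> carrier R" "mnm 1 qd \<in> carrier R" "mnm 1 r \<in> carrier R"
    using qdev rev by (simp_all add: mnm_carrier zero_ev)
  have c2: "mnm c (\<lambda>_. 0) \<otimes>\<^bsub>R\<^esub> mnm 1 qd \<in> carrier R"
    using ring.ring_simprules(5)[OF Rring c1(1,2)] .
  have "\<pi> (mnm c \<alpha>) = \<pi> (mnm c (\<lambda>_. 0) \<otimes>\<^bsub>R\<^esub> mnm 1 qd) \<otimes>\<^bsub>Q\<^esub> \<pi> (mnm 1 r)"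
    unfolding e by (rule \<pi>mult[OF c2 c1(3)])
  also have "\<pi> (mnm c (\<lambda>_. 0) \<otimes>\<^bsub>R\<^esub> mnm 1 qd) = \<iota> c \<otimes>\<^bsub>Q\<^esub> \<pi> (mnm 1 qd)"
    unfolding \<iota>_def const_mnm by (rule \<pi>mult[OF c1(1,2)])
  finally have "\<pi> (mnm c \<alpha>) = (\<iota> c \<otimes>\<^bsub>Q\<^esub> \<pi> (mnm 1 qd)) \<otimes>\<^bsub>Q\<^esub> \<pi> (mnm 1 r)" .
  moreover have "\<iota> c \<otimes>\<^bsub>Q\<^esub> \<pi> (mnm 1 qd) \<in> nn.Dg z n"
    using subringE(6)[OF Dg_sub nn.Dg_\<iota> Dg_beta[of n q]] by (simp add: qd_def)
  moreover have "\<pi> (mnm 1 r) \<in> G" using rR by (simp add: G_def)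
  ultimately show ?thesis by (simp add: lspan.lgen)
qed

lemma all_in_span:
  assumes s: "s \<in> carrier Q"
  shows "s \<in> lspan Q (nn.Dg z n) G"
proof -
  interpret Rr: ring R by (rule Rring)
  obtain p where p: "p \<in> carrier R" "s = \<pi> p" using Q_carrier_\<pi>[OF s] by blast
  have fin: "finite {\<alpha>. p \<alpha> \<noteq> 0}" and ev: "\<forall>\<alpha>. p \<alpha> \<noteq> 0 \<longrightarrow> \<alpha> \<in> expvecs n"
    using p by (auto simp: skew_poly_ring_def)
  have gen: "finite A \<Longrightarrow> A \<subseteq> {\<alpha>. p \<alpha> \<noteq> 0} \<Longrightarrow> \<pi> (finsum R (\<lambda>\<alpha>. mnm (p \<alpha>) \<alpha>) A) \<in> lspan Q (nn.Dg z n) G" for A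
  proof (induction A rule: finite_induct)
    case empty
    have "finsum R (\<lambda>\<alpha>. mnm (p \<alpha>) \<alpha>) {} = \<zero>\<^bsub>R\<^esub>" by (rule Rr.finsum_empty)
    then show ?case using \<pi>zero by (simp add: lspan.lzero)
  next
    case (insert x A)
    have fc: "(\<lambda>\<alpha>. mnm (p \<alpha>) \<alpha>) \<in> A \<rightarrow> carrier R" "mnm (p x) x \<in> carrier R"
      using insert ev by (auto intro!: mnm_carrier)
    have "finsum R (\<lambda>\<alpha>. mnm (p \<alpha>) \<alpha>) (insert x A) = mnm (p x) x \<oplus>\<^bsub>R\<^esub> finsum R (\<lambda>\<alpha>. mnm (p \<alpha>) \<alpha>) A"
      by (rule Rr.finsum_insert) (use insert fc in auto)
    moreover have "finsum R (\<lambda>\<alpha>. mnm (p \<alpha>) \<alpha>) A \<in> carrier R"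
      by (rule Rr.finsum_closed) (use fc in auto)
    ultimately have "\<pi> (finsum R (\<lambda>\<alpha>. mnm (p \<alpha>) \<alpha>) (insert x A)) = \<pi> (mnm (p x) x) \<oplus>\<^bsub>Q\<^esub> \<pi> (finsum R (\<lambda>\<alpha>. mnm (p \<alpha>) \<alpha>) A)"
      using fc by (simp add: \<pi>add)
    moreover have "\<pi> (mnm (p x) x) \<in> lspan Q (nn.Dg z n) G" using insert ev by (intro mono_in_span) auto
    ultimately show ?case using insert by (simp add: lspan.ladd)
  qed
  have "s = \<pi> (finsum R (\<lambda>\<alpha>. mnm (p \<alpha>) \<alpha>) {\<alpha>. p \<alpha> \<noteq> 0})" using p poly_decomp[OF Rring p(1)] by simp
  then show ?thesis using gen[OF fin] by simp
qed

lemma final: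
  assumes cen: "central \<longrightarrow> \<theta> = id"
  shows "normalizable_over central Q \<iota>"
proof -
  obtain m y H where y: "nn.autom y m" "nn.indep y m" "finite H" "H \<subseteq> carrier Q"
    and sub: "nn.Dg z n \<subseteq> lspan Q (nn.Dg y m) H" using nn.NN[OF autom_z] by blast
  define H2 where "H2 = {h \<otimes>\<^bsub>Q\<^esub> x |h x. h \<in> H \<and> x \<in> G}"
  have H2: "carrier Q \<subseteq> lspan Q (nn.Dg y m) H2"
  proof
    fix s assume "s \<in> carrier Q"
    then have "s \<in> lspan Q (nn.Dg z n) G" by (rule all_in_span)
    then show "s \<in> lspan Q (nn.Dg y m) H2" unfolding H2_def
      by (rule nn.lspan_trans[OF nn.Dg_subring[OF y(1)] y(4) G_carr sub])
  qed
  have H2fin: "finite H2" unfolding H2_def by (rule finite_image_set2) (use y(3) G_fin in simp_all)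
  have H2c: "H2 \<subseteq> carrier Q" unfolding H2_def using y(4) G_carr by blast
  have gen: "\<forall>s\<in>carrier Q. \<exists>r. r \<in> H2 \<rightarrow> generate_ring Q (range \<iota> \<union> y ` {..<m}) \<and>
              s = finsum Q (\<lambda>g. r g \<otimes>\<^bsub>Q\<^esub> g) H2"
  proof
    fix s assume "s \<in> carrier Q"
    then have "s \<in> lspan Q (nn.Dg y m) H2" using H2 by blast
    from nn.lspan_finsum[OF nn.Dg_subring[OF y(1)] H2fin H2c this]
    show "\<exists>r. r \<in> H2 \<rightarrow> generate_ring Q (range \<iota> \<union> y ` {..<m}) \<and> s = finsum Q (\<lambda>g. r g \<otimes>\<^bsub>Q\<^esub> g) H2"
      unfolding nn.Dg_def .
  qed
  have ya: "(\<forall>i<m. y i \<in> carrier Q) \<and> (\<forall>i<m. \<forall>j<m. y i \<otimes>\<^bsub>Q\<^esub> y j = y j \<otimes>\<^bsub>Q\<^esub> y i)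
     \<and> (\<forall>i<m. \<forall>b. y i \<otimes>\<^bsub>Q\<^esub> \<iota> b = \<iota> (\<theta> b) \<otimes>\<^bsub>Q\<^esub> y i)"
    using y(1) unfolding nn.autom_def .
  show ?thesis unfolding normalizable_over_def
  proof (intro exI[of _ m] exI[of _ y] exI[of _ "\<lambda>_. \<theta>"] conjI)
    show "\<exists>G. finite G \<and> G \<subseteq> carrier Q \<and> (\<forall>s\<in>carrier Q. \<exists>r. r \<in> G \<rightarrow> generate_ring Q (range \<iota> \<union> y ` {..<m}) \<and>
              s = finsum Q (\<lambda>g. r g \<otimes>\<^bsub>Q\<^esub> g) G)"
      using H2fin H2c gen by blast
    show "\<forall>c. finite {\<alpha>. c \<alpha> \<noteq> 0} \<and> (\<forall>\<alpha>. c \<alpha> \<noteq> 0 \<longrightarrow> \<alpha> \<in> expvecs m) \<and>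
        finsum Q (\<lambda>\<alpha>. \<iota> (c \<alpha>) \<otimes>\<^bsub>Q\<^esub> smonom Q y m \<alpha>) {\<alpha>. c \<alpha> \<noteq> 0} = \<zero>\<^bsub>Q\<^esub> \<longrightarrow> (\<forall>\<alpha>. c \<alpha> = 0)"
      using y(2) unfolding nn.indep_def .
    show "\<forall>i<m. y i \<in> carrier Q" using ya by blast
    show "\<forall>i<m. \<forall>j<m. y i \<otimes>\<^bsub>Q\<^esub> y j = y j \<otimes>\<^bsub>Q\<^esub> y i" using ya by blast
    show "\<forall>i<m. \<forall>b. y i \<otimes>\<^bsub>Q\<^esub> \<iota> b = \<iota> (\<theta> b) \<otimes>\<^bsub>Q\<^esub> y i" using ya by blast
    show "\<forall>i<m. ring_aut \<theta>" using th_aut by blast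
    show "\<forall>i<m. \<forall>j<m. \<theta> \<circ> \<theta> = \<theta> \<circ> \<theta>" by blast
    show "central \<longrightarrow> (\<forall>i<m. \<theta> = id)" using cen by blast
  qed
qed

end

lemma ring_aut_id: "ring_aut id"
  by (simp add: ring_aut_def)

lemma quot_case:
  fixes \<sigma> :: "nat \<Rightarrow> 'a::division_ring \<Rightarrow> 'a" and n :: nat
  assumes aut: "\<forall>i<n. ring_aut (\<sigma> i)"
    and inf: "infinite {x::'a. (\<forall>y. x * y = y * x) \<and> (\<forall>i<n. \<sigma> i x = x)}"
    and dpos: "\<forall>i<n. 0 < d i" and dth: "\<forall>i<n. \<sigma> i ^^ d i = \<theta>"
    and th_aut: "ring_aut \<theta>"
    and th_fix: "\<forall>x\<in>{x::'a. (\<forall>y. x * y = y * x) \<and> (\<forall>i<n. \<sigma> i x = x)}. \<theta> x = x"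
    and cen: "central \<longrightarrow> \<theta> = id"
  shows "tuple_normalizable central n \<sigma>"
  unfolding tuple_normalizable_def
proof (intro allI impI)
  fix I assume I: "ideal I (skew_poly_ring \<sigma> n) \<and> I \<noteq> carrier (skew_poly_ring \<sigma> n)"
  interpret q: qsetup2 \<sigma> n I d \<theta>
    by (intro qsetup2.intro qsetup.intro qsetup2_axioms.intro) (use assms I in auto)
  have e: "q.\<iota> = (\<lambda>d. I +>\<^bsub>skew_poly_ring \<sigma> n\<^esub> const_poly d)"
    by (simp add: fun_eq_iff q.\<iota>_def q.\<pi>_def)
  show "normalizable_over central (skew_poly_ring \<sigma> n Quot I) (\<lambda>d. I +>\<^bsub>skew_poly_ring \<sigma> n\<^esub> const_poly d)"
    using q.final[OF cen] unfolding e .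
qed

theorem corollary3p8:
  fixes \<sigma> :: "nat \<Rightarrow> 'a::division_ring \<Rightarrow> 'a" and n :: nat
  assumes aut: "\<forall>i<n. ring_aut (\<sigma> i)"
    and comm: "\<forall>i<n. \<forall>j<n. \<sigma> i \<circ> \<sigma> j = \<sigma> j \<circ> \<sigma> i"
    and inf: "infinite {x::'a. (\<forall>y. x * y = y * x) \<and> (\<forall>i<n. \<sigma> i x = x)}"
  shows "((\<exists>d::nat \<Rightarrow> nat. (\<forall>i<n. 0 < d i) \<and> (\<forall>i<n. \<forall>j<n. \<sigma> i ^^ d i = \<sigma> j ^^ d j))
            \<longrightarrow> tuple_aut_normalizable n \<sigma>)
       \<and> ((\<forall>i<n. \<exists>k>0. \<sigma> i ^^ k = id) \<longrightarrow> tuple_central_normalizable n \<sigma>)"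
proof (intro conjI impI)
  assume "\<exists>d::nat \<Rightarrow> nat. (\<forall>i<n. 0 < d i) \<and> (\<forall>i<n. \<forall>j<n. \<sigma> i ^^ d i = \<sigma> j ^^ d j)"
  then obtain d :: "nat \<Rightarrow> nat" where dpos: "\<forall>i<n. 0 < d i" and deq: "\<forall>i<n. \<forall>j<n. \<sigma> i ^^ d i = \<sigma> j ^^ d j"
    by blast
  define \<theta> where "\<theta> = (if n = 0 then id else \<sigma> 0 ^^ d 0)"
  have dth: "\<forall>i<n. \<sigma> i ^^ d i = \<theta>"
  proof (intro allI impI)
    fix i assume i: "i < n"
    then have "n \<noteq> 0" "0 < n" by auto
    have "\<sigma> i ^^ d i = \<sigma> 0 ^^ d 0" using deq i \<open>0 < n\<close> by blast
    then show "\<sigma> i ^^ d i = \<theta>" using \<open>n \<noteq> 0\<close> unfolding \<theta>_def by simp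
  qed
  have th_aut: "ring_aut \<theta>"
  proof (cases "n = 0")
    case True then show ?thesis using ring_aut_id by (simp add: \<theta>_def)
  next
    case False
    then have "ring_aut (\<sigma> 0)" using aut by simp
    then show ?thesis using False ring_aut_funpow by (simp add: \<theta>_def)
  qed
  have th_fix: "\<forall>x\<in>{x::'a. (\<forall>y. x * y = y * x) \<and> (\<forall>i<n. \<sigma> i x = x)}. \<theta> x = x"
  proof
    fix x assume x: "x \<in> {x::'a. (\<forall>y. x * y = y * x) \<and> (\<forall>i<n. \<sigma> i x = x)}"
    show "\<theta> x = x"
    proof (cases "n = 0")
      case True then show ?thesis by (simp add: \<theta>_def)
    next
      case False
      then have "\<sigma> 0 x = x" using x by simp
      then show ?thesis using False funpow_fix[of "\<sigma> 0" x "d 0"] by (simp add: \<theta>_def)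
    qed
  qed
  show "tuple_aut_normalizable n \<sigma>"
    by (rule quot_case[OF aut inf dpos dth th_aut th_fix]) simp
next
  assume h: "\<forall>i<n. \<exists>k>0. \<sigma> i ^^ k = id"
  define d where "d = (\<lambda>i. SOME k. k > 0 \<and> \<sigma> i ^^ k = id)"
  have dd: "\<forall>i<n. d i > 0 \<and> \<sigma> i ^^ d i = id"
  proof (intro allI impI)
    fix i assume "i < n"
    then have "\<exists>k. k > 0 \<and> \<sigma> i ^^ k = id" using h by blast
    then show "d i > 0 \<and> \<sigma> i ^^ d i = id" unfolding d_def by (rule someI_ex)
  qed
  show "tuple_central_normalizable n \<sigma>"
  proof (rule quot_case[OF aut inf, of d id])
    show "\<forall>i<n. 0 < d i" using dd by blast
    show "\<forall>i<n. \<sigma> i ^^ d i = id" using dd by blast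
  qed (simp_all add: ring_aut_id)
qed


end
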